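(* Fix $\Gamma z_0\in\mathcal M$. For any sequence of positive numbers $\{c_n\}_{n\in\mathbb N}$ there exists a sequence $\{y_n\}_{n\in\mathbb N}$ with $0<y_n<c_n$ for every $n$ such that for Lebesgue-almost every $x\in\mathbb R/\mathbb Z$, $$\limsup_{n\to\infty}\frac{\inf_{\Gamma z\in\mathcal R_n(x,y_n)}d_{\mathcal M}(\Gamma z_0,\Gamma z)}{\log\log n}\ge1.$$
   Context: $\mathcal M=\Gamma\backslash\mathbb H$ with $\Gamma=\mathrm{SL}_2(\mathbb Z)$; $d_{\mathcal M}(\Gamma z_1,\Gamma z_2)=\inf_{\gamma\in\Gamma}d_{\mathbb H}(\gamma z_1,z_2)$ with $d_{\mathbb H}$ the hyperbolic distance. $\mathcal R_n(x,y)=\{\Gamma(x+\tfrac jn+iy):0\le j\le n-1\}$. *)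

theory Defs
  imports "HOL-Analysis.Analysis"
begin

definition upper_half_plane :: "complex set" where
  "upper_half_plane = {z. Im z > 0}"

definition hyp_dist :: "complex \<Rightarrow> complex \<Rightarrow> real" where
  "hyp_dist z w = arcosh (1 + (cmod (z - w))\<^sup>2 / (2 * Im z * Im w))"

definition SL2Z :: "(int \<times> int \<times> int \<times> int) set" where
  "SL2Z = {(a, b, c, d). a * d - b * c = 1}"

fun moebius_act :: "int \<times> int \<times> int \<times> int \<Rightarrow> complex \<Rightarrow> complex" where
  "moebius_act (a, b, c, d) z = (of_int a * z + of_int b) / (of_int c * z + of_int d)"

definition modular_dist :: "complex \<Rightarrow> complex \<Rightarrow> real" where
  "modular_dist z1 z2 = (INF g\<in>SL2Z. hyp_dist (moebius_act g z1) z2)"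

definition min_dist_Rn :: "complex \<Rightarrow> nat \<Rightarrow> real \<Rightarrow> real \<Rightarrow> real" where
  "min_dist_Rn z0 n x y =
     (INF j\<in>{0..<n}. modular_dist z0 (Complex (x + real j / real n) y))"

end

theory Submission
  imports Defs
begin


lemma Im_moebius:
  fixes p q c d :: int
  assumes "p*d - q*c = 1"
  shows "Im (moebius_act (p,q,c,d) z) = Im z / (cmod (of_int c * z + of_int d))^2"
proof -
  have e: "real_of_int p * real_of_int d - real_of_int q * real_of_int c = 1"
    using assms by (metis of_int_1 of_int_diff of_int_mult)
  have "Im (moebius_act (p,q,c,d) z) = (Im z * (real_of_int p * real_of_int d - real_of_int q * real_of_int c)) / (cmod (of_int c * z + of_int d))^2"
    by (simp add: Im_divide' algebra_simps)
  then show ?thesis using e by simp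
qed

lemma denom_nz:
  fixes p q c d :: int
  assumes "p*d - q*c = 1" "Im z > 0"
  shows "of_int c * z + of_int d \<noteq> 0"
proof
  assume h: "of_int c * z + of_int d = 0"
  then have "Im (of_int c * z + of_int d) = 0" by simp
  then have "c = 0" using assms(2) by simp
  with h have "d = 0" by simp
  with \<open>c = 0\<close> assms(1) show False by simp
qed

lemma diff_moebius:
  fixes p q c d :: int
  assumes "p*d - q*c = 1" "of_int c * z + of_int d \<noteq> 0" "of_int c * w + of_int d \<noteq> 0"
  shows "moebius_act (p,q,c,d) z - moebius_act (p,q,c,d) w
         = (z - w) / ((of_int c * z + of_int d) * (of_int c * w + of_int d))"
proof -
  have e: "(of_int p * of_int d - of_int q * of_int c :: complex) = 1"
    using assms by (metis of_int_1 of_int_diff of_int_mult)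
  have "moebius_act (p,q,c,d) z - moebius_act (p,q,c,d) w
      = ((of_int p * of_int d - of_int q * of_int c) * (z - w)) / ((of_int c * z + of_int d) * (of_int c * w + of_int d))"
    using assms(2,3) by (simp add: field_simps)
  then show ?thesis using e by simp
qed

lemma hyp_dist_invariant:
  fixes p q c d :: int
  assumes "p*d - q*c = 1" "Im z > 0" "Im w > 0"
  shows "hyp_dist (moebius_act (p,q,c,d) z) (moebius_act (p,q,c,d) w) = hyp_dist z w"
proof -
  let ?A = "of_int c * z + of_int d" and ?B = "of_int c * w + of_int d"
  have A: "?A \<noteq> 0" and B: "?B \<noteq> 0" using denom_nz assms by auto
  have nA: "cmod ?A > 0" and nB: "cmod ?B > 0" using A B by auto
  have "(cmod (moebius_act (p,q,c,d) z - moebius_act (p,q,c,d) w))\<^sup>2 /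
        (2 * Im (moebius_act (p,q,c,d) z) * Im (moebius_act (p,q,c,d) w))
      = ((cmod (z - w))\<^sup>2 / ((cmod ?A)^2 * (cmod ?B)^2)) / (2 * (Im z / (cmod ?A)^2) * (Im w / (cmod ?B)^2))"
    by (simp only: diff_moebius[OF assms(1) A B] Im_moebius[OF assms(1)] norm_divide norm_mult power_divide power_mult_distrib)
  also have "\<dots> = (cmod (z - w))\<^sup>2 / (2 * Im z * Im w)"
    using nA nB by (simp add: field_simps)
  finally show ?thesis unfolding hyp_dist_def by simp
qed

lemma hyp_dist_lower:
  assumes "Im a > 0" "Im b > 0"
  shows "hyp_dist a b \<ge> ln (Im b / Im a)"
proof -
  let ?s = "Im a" and ?t = "Im b"
  have "\<bar>?s - ?t\<bar> \<le> cmod (a - b)" using abs_Im_le_cmod[of "a - b"] by simp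
  then have "(?s - ?t)^2 \<le> (cmod (a - b))^2"
    by (metis abs_ge_zero power2_abs power_mono)
  then have Y: "?s^2 + ?t^2 \<le> 2 * ?s * ?t + (cmod (a - b))\<^sup>2"
    by (simp add: power2_diff)
  have st: "2 * ?s * ?t > 0" using assms by simp
  have X: "(?s^2 + ?t^2) / (2 * ?s * ?t) \<le> 1 + (cmod (a - b))\<^sup>2 / (2 * ?s * ?t)"
  proof -
    have "(?s^2 + ?t^2) / (2 * ?s * ?t) \<le> (2 * ?s * ?t + (cmod (a - b))\<^sup>2) / (2 * ?s * ?t)"
      using Y st by (intro divide_right_mono) auto
    also have "\<dots> = 1 + (cmod (a - b))\<^sup>2 / (2 * ?s * ?t)"
      using st assms by (simp add: add_divide_distrib)
    finally show ?thesis .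
  qed
  have X1: "1 \<le> (?s^2 + ?t^2) / (2 * ?s * ?t)"
  proof -
    have "2 * ?s * ?t \<le> ?s^2 + ?t^2" using sum_squares_bound[of ?s ?t] by (simp add: power2_eq_square)
    then show ?thesis using assms by simp
  qed
  show ?thesis
  proof (cases "?t \<ge> ?s")
    case False
    then have "ln (?t / ?s) \<le> 0" using assms by simp
    moreover have "0 \<le> hyp_dist a b" unfolding hyp_dist_def
      using X X1 by (intro arcosh_nonneg_real) linarith
    ultimately show ?thesis by linarith
  next
    case True
    have pos: "?t / ?s > 0" using assms by simp
    have c: "cosh (ln (?t / ?s)) = (?s^2 + ?t^2) / (2 * ?s * ?t)"
      using assms by (simp add: cosh_ln_real[OF pos] field_simps power2_eq_square)
    have l0: "ln (?t / ?s) \<ge> 0" using True assms by simp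
    have "ln (?t / ?s) = arcosh (cosh (ln (?t / ?s)))" using arcosh_cosh_real[OF l0] by simp
    also have "\<dots> \<le> hyp_dist a b" unfolding hyp_dist_def c
      using X X1 arcosh_less_iff_real[of "1 + (cmod (a - b))\<^sup>2 / (2 * ?s * ?t)" "(?s^2 + ?t^2) / (2 * ?s * ?t)"]
      by linarith
    finally show ?thesis .
  qed
qed

lemma int_sq_ge1:
  fixes D :: int
  assumes "D \<noteq> 0"
  shows "(real_of_int D)^2 \<ge> 1"
proof -
  have "1 \<le> \<bar>D\<bar>" using assms by simp
  then have h: "1 \<le> \<bar>real_of_int D\<bar>" by linarith
  have "1 \<le> \<bar>real_of_int D\<bar>^2" by (rule one_le_power[OF h])
  then show ?thesis by simp
qed

lemma cmod_lower:
  fixes C D :: int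
  assumes "C \<noteq> 0 \<or> D \<noteq> 0" "Im z > 0"
  shows "(cmod (of_int C * z + of_int D))^2 \<ge> min 1 ((Im z)^2)"
proof -
  have e: "(cmod (of_int C * z + of_int D))^2 = (of_int C * Re z + of_int D)^2 + (of_int C * Im z)^2"
    by (simp add: cmod_power2)
  show ?thesis
  proof (cases "C = 0")
    case True
    then have "D \<noteq> 0" using assms by simp
    then have "(of_int D :: real)^2 \<ge> 1"
      by (rule int_sq_ge1)
    then show ?thesis using e True by simp
  next
    case False
    then have "(of_int C :: real)^2 \<ge> 1"
      by (rule int_sq_ge1)
    then have "(of_int C * Im z)^2 \<ge> (Im z)^2"
      by (simp add: power_mult_distrib mult_le_cancel_right1)
    then show ?thesis using e by (smt (verit) zero_le_power2)
  qed
qed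

lemma Im_comp_bound:
  fixes a b c1 d1 p q c d :: int
  assumes "a*d1 - b*c1 = 1" "p*d - q*c = 1" "Im z0 > 0"
  shows "Im (moebius_act (p,q,c,d) (moebius_act (a,b,c1,d1) z0)) \<le> max (Im z0) (1 / Im z0)"
proof -
  define w where "w = moebius_act (a,b,c1,d1) z0"
  define C where "C = c*a + d*c1"
  define D where "D = c*b + d*d1"
  have A: "of_int c1 * z0 + of_int d1 \<noteq> 0" using denom_nz assms by auto
  have Imw: "Im w = Im z0 / (cmod (of_int c1 * z0 + of_int d1))^2"
    unfolding w_def using Im_moebius[OF assms(1)] by simp
  have Imwpos: "Im w > 0" using Imw A assms by simp
  have cw: "of_int c * w + of_int d = (of_int C * z0 + of_int D) / (of_int c1 * z0 + of_int d1)"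
    unfolding w_def C_def D_def using A by (simp add: field_simps)
  have CD: "C \<noteq> 0 \<or> D \<noteq> 0"
  proof (rule ccontr)
    assume "\<not> (C \<noteq> 0 \<or> D \<noteq> 0)"
    then have "C = 0" "D = 0" by auto
    have "D * (p*a + q*c1) - C * (p*b + q*d1) = (p*d - q*c) * (a*d1 - b*c1)"
      unfolding C_def D_def by (simp add: algebra_simps)
    then show False using \<open>C = 0\<close> \<open>D = 0\<close> assms by simp
  qed
  have nz: "cmod (of_int C * z0 + of_int D) > 0"
    using cmod_lower[OF CD assms(3)] assms(3)
    by (smt (verit, ccfv_SIG) min_def norm_ge_zero power_zero_numeral zero_less_power2)
  have "Im (moebius_act (p,q,c,d) w) = Im w / (cmod (of_int c * w + of_int d))^2"
    using Im_moebius[OF assms(2)] by simp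
  also have "\<dots> = Im z0 / (cmod (of_int C * z0 + of_int D))^2"
    using A nz unfolding Imw cw by (simp add: norm_divide power_divide)
  also have "\<dots> \<le> Im z0 / min 1 ((Im z0)^2)"
  proof -
    have m: "min 1 ((Im z0)^2) > 0" using assms(3) by simp
    show ?thesis
      using cmod_lower[OF CD assms(3)] assms(3) m nz
      by (intro divide_left_mono) (auto intro!: mult_pos_pos)
  qed
  also have "\<dots> \<le> max (Im z0) (1 / Im z0)"
    using assms(3) by (cases "Im z0 \<le> 1") (auto simp: min_def max_def power2_eq_square field_simps)
  finally show ?thesis unfolding w_def .
qed

lemma geo_main:
  fixes c d :: int
  assumes z0: "Im z0 > 0" and z: "Im z > 0" and c: "c \<noteq> 0" and h: "h > 0"
    and le: "(cmod (of_int c * z + of_int d))^2 \<le> Im z / h"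
  shows "modular_dist z0 z \<ge> ln h - ln (max (Im z0) (1 / Im z0))"
proof -
  define g0 where "g0 = gcd c d"
  define c' where "c' = c div g0"
  define d' where "d' = d div g0"
  have g0pos: "g0 > 0" unfolding g0_def using c by simp
  have cc: "c = c' * g0" unfolding c'_def g0_def by simp
  have dd: "d = d' * g0" unfolding d'_def g0_def by simp
  have cop: "coprime c' d'" unfolding c'_def d'_def g0_def using c div_gcd_coprime by blast
  obtain u v where uv: "u * c' + v * d' = 1"
    using bezout_int[of c' d'] cop by (auto simp: coprime_iff_gcd_eq_1)
  have det: "v * d' - (-u) * c' = 1" using uv by (simp add: algebra_simps)
  have "of_int c * z + of_int d = of_int g0 * (of_int c' * z + of_int d')"
    unfolding cc dd by (simp add: algebra_simps)
  then have "cmod (of_int c * z + of_int d) = of_int g0 * cmod (of_int c' * z + of_int d')"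
    using g0pos by (simp add: norm_mult)
  then have "cmod (of_int c' * z + of_int d') \<le> cmod (of_int c * z + of_int d)"
    using g0pos by (simp add: mult_le_cancel_right1)
  then have le': "(cmod (of_int c' * z + of_int d'))^2 \<le> Im z / h"
    using le by (meson norm_ge_zero order_trans power_mono)
  have nz: "of_int c' * z + of_int d' \<noteq> 0" using denom_nz[OF det z] .
  let ?M0 = "max (Im z0) (1 / Im z0)"
  let ?gam = "(v, -u, c', d')"
  have Imgz: "Im (moebius_act ?gam z) \<ge> h"
  proof -
    have pos: "(cmod (of_int c' * z + of_int d'))^2 > 0" using nz by simp
    have "Im (moebius_act ?gam z) = Im z / (cmod (of_int c' * z + of_int d'))^2"
      using Im_moebius[OF det] by simp
    also have "\<dots> \<ge> Im z / (Im z / h)"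
      using pos le' z h by (intro divide_left_mono) auto
    finally show ?thesis using z h by simp
  qed
  have M0pos: "?M0 > 0" using z0 by simp
  show ?thesis unfolding modular_dist_def
  proof (rule cINF_greatest)
    have "(1::int, 0::int, 0::int, 1::int) \<in> SL2Z" unfolding SL2Z_def by simp
    then show "SL2Z \<noteq> {}" by blast
  next
    fix g assume "g \<in> SL2Z"
    then obtain a b c1 d1 where g: "g = (a, b, c1, d1)" and gd: "a * d1 - b * c1 = 1"
      unfolding SL2Z_def by auto
    define w where "w = moebius_act g z0"
    have A: "of_int c1 * z0 + of_int d1 \<noteq> 0" using denom_nz gd z0 by auto
    have wpos: "Im w > 0" unfolding w_def g using Im_moebius[OF gd] A z0 by simp
    have Igw: "Im (moebius_act ?gam w) \<le> ?M0"
      unfolding w_def g using Im_comp_bound[OF gd det z0] .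
    have Igwpos: "Im (moebius_act ?gam w) > 0"
      using Im_moebius[OF det, of w] denom_nz[OF det wpos] wpos by simp
    have "ln h - ln ?M0 = ln (h / ?M0)" using h M0pos by (simp add: ln_div)
    also have "\<dots> \<le> ln (Im (moebius_act ?gam z) / Im (moebius_act ?gam w))"
    proof -
      have "h / ?M0 \<le> Im (moebius_act ?gam z) / ?M0" using Imgz M0pos by (simp add: divide_right_mono)
      also have "\<dots> \<le> Im (moebius_act ?gam z) / Im (moebius_act ?gam w)"
        using Igw Igwpos Imgz h by (intro divide_left_mono) auto
      finally have "h / ?M0 \<le> Im (moebius_act ?gam z) / Im (moebius_act ?gam w)" .
      moreover have "h / ?M0 > 0" using h M0pos by simp
      ultimately show ?thesis by (meson ln_le_cancel_iff order_less_le_trans)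
    qed
    also have "\<dots> \<le> hyp_dist (moebius_act ?gam w) (moebius_act ?gam z)"
      using Igwpos Imgz h by (intro hyp_dist_lower) auto
    also have "\<dots> = hyp_dist w z" using hyp_dist_invariant[OF det wpos z] .
    finally show "ln h - ln ?M0 \<le> hyp_dist (moebius_act g z0) z" unfolding w_def .
  qed
qed

lemma rn_lower:
  fixes n k :: nat and a :: int
  assumes z0: "Im z0 > 0" and n: "n \<ge> 1" and k: "k \<ge> 1" and y: "y > 0" and Hh: "Hh > 0"
    and ax: "\<bar>real n * real k * x - of_int a\<bar> \<le> r"
    and rr: "r^2 + (real n * real k * y)^2 \<le> y / Hh"
  shows "min_dist_Rn z0 n x y \<ge> ln Hh - ln (max (Im z0) (1 / Im z0))"
  unfolding min_dist_Rn_def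
proof (rule cINF_greatest)
  show "{0..<n} \<noteq> {}" using n by simp
next
  fix j assume j: "j \<in> {0..<n}"
  define z where "z = Complex (x + real j / real n) y"
  define c :: int where "c = int n * int k"
  define d :: int where "d = - (a + int j * int k)"
  have npos: "real n > 0" using n by simp
  have e: "of_int c * z + of_int d = Complex (real n * real k * x - of_int a) (real n * real k * y)"
    unfolding z_def c_def d_def using npos
    by (simp add: Complex_eq field_simps)
  have "(cmod (of_int c * z + of_int d))^2 = (real n * real k * x - of_int a)^2 + (real n * real k * y)^2"
    unfolding e by (simp add: cmod_power2)
  also have "\<dots> \<le> r^2 + (real n * real k * y)^2"
    using ax by (metis abs_ge_zero add_right_mono power2_abs power_mono)
  also have "\<dots> \<le> Im z / Hh" using rr unfolding z_def by simp
  finally have le: "(cmod (of_int c * z + of_int d))^2 \<le> Im z / Hh" .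
  have "c \<noteq> 0" unfolding c_def using n k by simp
  then show "ln Hh - ln (max (Im z0) (1 / Im z0)) \<le> modular_dist z0 (Complex (x + real j / real n) y)"
    using geo_main[OF z0 _ _ Hh le] y unfolding z_def by simp
qed



lemma sum_id_real: "(\<Sum>k\<in>{1..J}. real k) = real J * (real J + 1) / 2"
  by (induction J) (auto simp: field_simps)

lemma sum_id_real': "sum real {Suc 0..J} = real J * (real J + 1) / 2"
  using sum_id_real[of J] by simp

lemma sum_inv_sq: "(\<Sum>m\<in>{2..K}. 1 / (real m)^2) \<le> 3/4"
proof -
  have "K \<ge> 2 \<Longrightarrow> (\<Sum>m\<in>{2..K}. 1 / (real m)^2) \<le> 3/4 - 1 / real K" for K
  proof (induction K rule: nat_induct_at_least)
    case base then show ?case by (simp add: power2_eq_square)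
  next
    case (Suc K)
    have "(\<Sum>m\<in>{2..Suc K}. 1 / (real m)^2) = (\<Sum>m\<in>{2..K}. 1 / (real m)^2) + 1 / (real K + 1)^2"
      using Suc by (simp add: sum.atLeast_Suc_atMost_Suc_shift add.commute)
    also have "\<dots> \<le> 3/4 - 1 / real K + 1 / (real K + 1)^2" using Suc by simp
    also have "\<dots> \<le> 3/4 - 1 / real (Suc K)"
    proof -
      have K: "real K \<ge> 2" using Suc by simp
      have "1 / (real K + 1)^2 \<le> 1 / (real K * (real K + 1))"
        using K by (intro divide_left_mono) (auto simp: power2_eq_square)
      also have "\<dots> = 1 / real K - 1 / (real K + 1)" using K by (simp add: field_simps)
      finally have "1 / (real K + 1)^2 \<le> 1 / real K - 1 / (real K + 1)" .
      moreover have "1 / real (Suc K) = 1 / (real K + 1)" by (simp add: add.commute)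
      ultimately show ?thesis by linarith
    qed
    finally show ?case .
  qed
  note A = this
  show ?thesis
  proof (cases "K \<ge> 2")
    case True
    have "1 / real K \<ge> 0" by simp
    then show ?thesis using A[OF True] by linarith
  qed (auto simp: not_le)
qed

lemma sum_inv_sqrt: "(\<Sum>m\<in>{1..K}. 1 / real m) \<le> 2 * sqrt (real K)"
proof (induction K)
  case 0 then show ?case by simp
next
  case (Suc K)
  define s where "s = sqrt (real K)"
  define t where "t = sqrt (real K + 1)"
  have s0: "s \<ge> 0" unfolding s_def by simp
  have t1: "t \<ge> 1" unfolding t_def by simp
  have st: "t^2 = s^2 + 1" unfolding s_def t_def by simp
  have ts: "t \<ge> s" unfolding s_def t_def by simp
  have key: "1 / (real K + 1) \<le> 2 * t - 2 * s"
  proof -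
    have tt: "real K + 1 = t^2" unfolding t_def by simp
    have "(t - s) * (t + s) = 1" using st by (simp add: algebra_simps power2_eq_square)
    moreover have "t + s \<le> 2 * t" using ts by simp
    ultimately have "1 \<le> (t - s) * (2 * t)" using ts by (smt (verit) mult_left_mono)
    then have "1 \<le> (2 * t - 2 * s) * t" by (simp add: algebra_simps)
    also have "\<dots> \<le> (2 * t - 2 * s) * t^2" using ts t1
      by (intro mult_left_mono) (auto simp: power2_eq_square)
    finally show ?thesis unfolding tt using t1 by (simp add: field_simps)
  qed
  have "(\<Sum>m\<in>{1..Suc K}. 1 / real m) = (\<Sum>m\<in>{1..K}. 1 / real m) + 1 / (real K + 1)"
    by (simp add: add.commute)
  also have "\<dots> \<le> 2 * s + (2 * t - 2 * s)" using Suc key unfolding s_def by linarith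
  finally show ?case unfolding t_def by (simp add: add.commute)
qed

definition Tset :: "real \<Rightarrow> real \<Rightarrow> nat \<Rightarrow> int set" where
  "Tset \<alpha> \<beta> k = {a. \<alpha> * real k \<le> of_int a \<and> of_int a \<le> \<beta> * real k}"

definition Pset :: "real \<Rightarrow> real \<Rightarrow> nat \<Rightarrow> (nat \<times> int) set" where
  "Pset \<alpha> \<beta> J = (SIGMA k:{1..J}. Tset \<alpha> \<beta> k)"

lemma Tset_eq: "Tset \<alpha> \<beta> k = {\<lceil>\<alpha> * real k\<rceil>..\<lfloor>\<beta> * real k\<rfloor>}"
  unfolding Tset_def by (auto simp: ceiling_le_iff le_floor_iff)

lemma Tset_finite: "finite (Tset \<alpha> \<beta> k)"
  unfolding Tset_eq by simp

lemma Tset_card_lower: "real (card (Tset \<alpha> \<beta> k)) \<ge> (\<beta> - \<alpha>) * real k - 1"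
proof -
  have c: "card (Tset \<alpha> \<beta> k) = nat (\<lfloor>\<beta> * real k\<rfloor> - \<lceil>\<alpha> * real k\<rceil> + 1)"
    unfolding Tset_eq by simp
  have "of_int (\<lfloor>\<beta> * real k\<rfloor> - \<lceil>\<alpha> * real k\<rceil> + 1) \<ge> (\<beta> - \<alpha>) * real k - 1"
    using of_int_floor_le[of "\<beta> * real k"] le_of_int_ceiling[of "\<alpha> * real k"]
      real_of_int_floor_gt_diff_one[of "\<beta> * real k"] ceiling_less_cancel
      ceiling_correct[of "\<alpha> * real k"]
    by (simp add: algebra_simps)
  then show ?thesis unfolding c by linarith
qed

lemma Tset_card_upper:
  assumes "\<alpha> \<le> \<beta>"
  shows "real (card (Tset \<alpha> \<beta> k)) \<le> (\<beta> - \<alpha>) * real k + 1"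
proof -
  have c: "card (Tset \<alpha> \<beta> k) = nat (\<lfloor>\<beta> * real k\<rfloor> - \<lceil>\<alpha> * real k\<rceil> + 1)"
    unfolding Tset_eq by simp
  have e: "real_of_int (\<lfloor>\<beta> * real k\<rfloor> - \<lceil>\<alpha> * real k\<rceil> + 1) = of_int \<lfloor>\<beta> * real k\<rfloor> - of_int \<lceil>\<alpha> * real k\<rceil> + 1"
    by simp
  have "of_int (\<lfloor>\<beta> * real k\<rfloor> - \<lceil>\<alpha> * real k\<rceil> + 1) \<le> (\<beta> - \<alpha>) * real k + 1"
    unfolding e using of_int_floor_le[of "\<beta> * real k"] le_of_int_ceiling[of "\<alpha> * real k"]
    by (simp add: algebra_simps) linarith
  moreover have "(\<beta> - \<alpha>) * real k + 1 \<ge> 0" using assms by simp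
  ultimately show ?thesis unfolding c by (cases "\<lfloor>\<beta> * real k\<rfloor> - \<lceil>\<alpha> * real k\<rceil> + 1 \<ge> 0") auto
qed

lemma Pset_finite: "finite (Pset \<alpha> \<beta> J)"
  unfolding Pset_def using Tset_finite by auto

lemma Pset_card: "card (Pset \<alpha> \<beta> J) = (\<Sum>k\<in>{1..J}. card (Tset \<alpha> \<beta> k))"
  unfolding Pset_def using Tset_finite by (simp add: card_SigmaI)

lemma Pset_card_lower:
  "real (card (Pset \<alpha> \<beta> J)) \<ge> (\<beta> - \<alpha>) * (real J * (real J + 1) / 2) - real J"
proof -
  have "real (card (Pset \<alpha> \<beta> J)) = (\<Sum>k\<in>{1..J}. real (card (Tset \<alpha> \<beta> k)))"
    unfolding Pset_card by simp
  also have "\<dots> \<ge> (\<Sum>k\<in>{1..J}. (\<beta> - \<alpha>) * real k - 1)"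
    by (intro sum_mono Tset_card_lower)
  finally show ?thesis by (simp add: sum_subtractf sum_distrib_left[symmetric] sum_id_real')
qed

lemma Pset_card_upper:
  assumes "\<alpha> \<le> \<beta>"
  shows "real (card (Pset \<alpha> \<beta> J)) \<le> (\<beta> - \<alpha>) * (real J * (real J + 1) / 2) + real J"
proof -
  have "real (card (Pset \<alpha> \<beta> J)) = (\<Sum>k\<in>{1..J}. real (card (Tset \<alpha> \<beta> k)))"
    unfolding Pset_card by simp
  also have "\<dots> \<le> (\<Sum>k\<in>{1..J}. (\<beta> - \<alpha>) * real k + 1)"
    by (intro sum_mono Tset_card_upper assms)
  finally show ?thesis by (simp add: sum.distrib sum_distrib_left[symmetric] sum_id_real')
qed

definition Bset :: "real \<Rightarrow> real \<Rightarrow> nat \<Rightarrow> (nat \<times> int) set" where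
  "Bset \<alpha> \<beta> K = {p \<in> Pset \<alpha> \<beta> K. \<not> coprime (int (fst p)) (snd p)}"

definition Gset :: "real \<Rightarrow> real \<Rightarrow> nat \<Rightarrow> (nat \<times> int) set" where
  "Gset \<alpha> \<beta> K = {p \<in> Pset \<alpha> \<beta> K. coprime (int (fst p)) (snd p)}"

lemma Bset_card:
  "card (Bset \<alpha> \<beta> K) \<le> (\<Sum>m\<in>{2..K}. card (Pset \<alpha> \<beta> (K div m)))"
proof -
  define f :: "nat \<times> int \<Rightarrow> nat \<times> nat \<times> int" where
    "f p = (nat (gcd (int (fst p)) (snd p)), (fst p div nat (gcd (int (fst p)) (snd p)),
            snd p div gcd (int (fst p)) (snd p)))" for p
  have mem: "f p \<in> (SIGMA m:{2..K}. Pset \<alpha> \<beta> (K div m))" if p: "p \<in> Bset \<alpha> \<beta> K" for p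
  proof -
    obtain k a where pk: "p = (k, a)" by (cases p)
    from p have k1: "1 \<le> k" and kK: "k \<le> K" and T: "a \<in> Tset \<alpha> \<beta> k"
      and nc: "\<not> coprime (int k) a"
      unfolding Bset_def Pset_def pk by auto
    define g where "g = gcd (int k) a"
    have gpos: "g > 0" unfolding g_def using k1 by simp
    have g1: "g \<noteq> 1" using nc unfolding g_def by (simp add: coprime_iff_gcd_eq_1)
    have g2: "g \<ge> 2" using gpos g1 by simp
    define m where "m = nat g"
    have mg: "int m = g" unfolding m_def using gpos by simp
    have m2: "m \<ge> 2" using g2 mg by simp
    have gdk: "g dvd int k" unfolding g_def by simp
    then have mdk: "m dvd k" using mg by (metis int_dvd_int_iff)
    have gda: "g dvd a" unfolding g_def by simp
    define k' where "k' = k div m"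
    define a' where "a' = a div g"
    have kk: "k = m * k'" unfolding k'_def using mdk by simp
    have aa: "a = g * a'" unfolding a'_def using gda by simp
    have k'1: "k' \<ge> 1" using kk k1 by (cases k') auto
    have "m * 1 \<le> m * k'" using k'1 by (rule mult_le_mono2)
    then have "m \<le> k" using kk by simp
    then have mK: "m \<le> K" using kK by simp
    have k'K: "k' \<le> K div m" unfolding k'_def using kK by (rule div_le_mono)
    have mpos: "real m > 0" using m2 by simp
    have gm: "real_of_int g = real m" using mg by (metis of_int_of_nat_eq)
    have "\<alpha> * real k \<le> of_int a \<and> of_int a \<le> \<beta> * real k" using T unfolding Tset_def by simp
    then have "real m * (\<alpha> * real k') \<le> real m * of_int a' \<and> real m * of_int a' \<le> real m * (\<beta> * real k')"
      unfolding kk aa using gm by (simp add: algebra_simps)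
    then have "a' \<in> Tset \<alpha> \<beta> k'" unfolding Tset_def using mpos by auto
    moreover have "f p = (m, (k', a'))" unfolding f_def pk m_def k'_def a'_def g_def by simp
    ultimately show ?thesis unfolding Pset_def using m2 mK k'1 k'K by auto
  qed
  have inj: "inj_on f (Bset \<alpha> \<beta> K)"
  proof (rule inj_onI)
    fix p q assume p: "p \<in> Bset \<alpha> \<beta> K" and q: "q \<in> Bset \<alpha> \<beta> K" and e: "f p = f q"
    obtain k a where pk: "p = (k, a)" by (cases p)
    obtain l b where ql: "q = (l, b)" by (cases q)
    from p have k1: "1 \<le> k" unfolding Bset_def Pset_def pk by auto
    from q have l1: "1 \<le> l" unfolding Bset_def Pset_def ql by auto
    have g1: "gcd (int k) a > 0" "gcd (int l) b > 0" using k1 l1 by auto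
    from e have ge: "nat (gcd (int k) a) = nat (gcd (int l) b)" unfolding f_def pk ql by simp
    then have ge': "gcd (int k) a = gcd (int l) b" using g1 by (metis less_imp_le int_nat_eq)
    from e have d1: "k div nat (gcd (int k) a) = l div nat (gcd (int l) b)"
      and d2: "a div gcd (int k) a = b div gcd (int l) b" unfolding f_def pk ql by auto
    have i1: "int (nat (gcd (int k) a)) = gcd (int k) a" using g1 by simp
    have i2: "int (nat (gcd (int l) b)) = gcd (int l) b" using g1 by simp
    have "int (nat (gcd (int k) a)) dvd int k" unfolding i1 by simp
    then have dk: "nat (gcd (int k) a) dvd k" by (simp only: int_dvd_int_iff)
    have "int (nat (gcd (int l) b)) dvd int l" unfolding i2 by simp
    then have dl: "nat (gcd (int l) b) dvd l" by (simp only: int_dvd_int_iff)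
    have "k = k div nat (gcd (int k) a) * nat (gcd (int k) a)" using dk by simp
    also have "\<dots> = l div nat (gcd (int l) b) * nat (gcd (int l) b)" using d1 ge by simp
    also have "\<dots> = l" using dl by simp
    finally have "k = l" .
    moreover have "a = b"
    proof -
      have "a = a div gcd (int k) a * gcd (int k) a" by simp
      also have "\<dots> = b div gcd (int l) b * gcd (int l) b" using d2 ge' by simp
      also have "\<dots> = b" by simp
      finally show ?thesis .
    qed
    ultimately show "p = q" using pk ql by simp
  qed
  have fin: "finite (SIGMA m:{2..K}. Pset \<alpha> \<beta> (K div m))" using Pset_finite by auto
  have "card (Bset \<alpha> \<beta> K) \<le> card (SIGMA m:{2..K}. Pset \<alpha> \<beta> (K div m))"
    using card_inj_on_le[OF inj _ fin] mem by blast
  also have "\<dots> = (\<Sum>m\<in>{2..K}. card (Pset \<alpha> \<beta> (K div m)))"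
    using Pset_finite by (simp add: card_SigmaI)
  finally show ?thesis .
qed

lemma Bset_card_real:
  assumes ab: "\<alpha> \<le> \<beta>"
  shows "real (card (Bset \<alpha> \<beta> K)) \<le> 3/8 * (\<beta> - \<alpha>) * (real K)^2 + ((\<beta> - \<alpha>)/2 + 1) * real K * (2 * sqrt (real K))"
proof -
  define L where "L = \<beta> - \<alpha>"
  have L0: "L \<ge> 0" unfolding L_def using ab by simp
  have each: "real (card (Pset \<alpha> \<beta> (K div m))) \<le> L * (real K)^2 / 2 * (1 / (real m)^2) + (L * real K / 2 + real K) * (1 / real m)"
    if m: "m \<in> {2..K}" for m
  proof -
    define J where "J = K div m"
    have mpos: "real m > 0" using m by simp
    have J0: "real J \<ge> 0" by simp
    have JK: "real J \<le> real K / real m" unfolding J_def by (rule of_nat_div_le_of_nat)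
    have "real (card (Pset \<alpha> \<beta> J)) \<le> L * (real J * (real J + 1) / 2) + real J"
      unfolding L_def using Pset_card_upper[OF ab] .
    also have "\<dots> \<le> L * ((real K / real m) * (real K / real m + 1) / 2) + real K / real m"
      using JK J0 L0 by (intro add_mono mult_left_mono divide_right_mono mult_mono) auto
    also have "\<dots> = L * (real K)^2 / 2 * (1 / (real m)^2) + (L * real K / 2 + real K) * (1 / real m)"
      using mpos by (simp add: field_simps power2_eq_square)
    finally show ?thesis unfolding J_def .
  qed
  have "real (card (Bset \<alpha> \<beta> K)) \<le> (\<Sum>m\<in>{2..K}. real (card (Pset \<alpha> \<beta> (K div m))))"
    using Bset_card by (metis of_nat_le_iff of_nat_sum)
  also have "\<dots> \<le> (\<Sum>m\<in>{2..K}. L * (real K)^2 / 2 * (1 / (real m)^2) + (L * real K / 2 + real K) * (1 / real m))"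
    using each by (rule sum_mono)
  also have "\<dots> = L * (real K)^2 / 2 * (\<Sum>m\<in>{2..K}. 1 / (real m)^2) + (L * real K / 2 + real K) * (\<Sum>m\<in>{2..K}. 1 / real m)"
    by (simp add: sum.distrib sum_distrib_left)
  also have "\<dots> \<le> L * (real K)^2 / 2 * (3/4) + (L * real K / 2 + real K) * (2 * sqrt (real K))"
  proof (intro add_mono mult_left_mono)
    show "(\<Sum>m\<in>{2..K}. 1 / (real m)^2) \<le> 3/4" by (rule sum_inv_sq)
    have "(\<Sum>m\<in>{2..K}. 1 / real m) \<le> (\<Sum>m\<in>{1..K}. 1 / real m)"
      by (intro sum_mono2) auto
    then show "(\<Sum>m\<in>{2..K}. 1 / real m) \<le> 2 * sqrt (real K)" using sum_inv_sqrt[of K] by linarith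
  qed (use L0 in auto)
  also have "\<dots> = 3/8 * L * (real K)^2 + (L/2 + 1) * real K * (2 * sqrt (real K))"
    by (simp add: field_simps)
  finally show ?thesis unfolding L_def .
qed

lemma Gset_card_real:
  assumes ab: "\<alpha> \<le> \<beta>"
  shows "real (card (Gset \<alpha> \<beta> K)) \<ge> (\<beta> - \<alpha>) * (real K)^2 / 8 - real K - ((\<beta> - \<alpha>) + 2) * real K * sqrt (real K)"
proof -
  have part: "Pset \<alpha> \<beta> K = Gset \<alpha> \<beta> K \<union> Bset \<alpha> \<beta> K" "Gset \<alpha> \<beta> K \<inter> Bset \<alpha> \<beta> K = {}"
    unfolding Gset_def Bset_def by auto
  have fG: "finite (Gset \<alpha> \<beta> K)" and fB: "finite (Bset \<alpha> \<beta> K)"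
    using Pset_finite[of \<alpha> \<beta> K] part(1) by auto
  have "card (Pset \<alpha> \<beta> K) = card (Gset \<alpha> \<beta> K) + card (Bset \<alpha> \<beta> K)"
    unfolding part(1) using card_Un_disjoint[OF fG fB part(2)] .
  then have G: "real (card (Gset \<alpha> \<beta> K)) = real (card (Pset \<alpha> \<beta> K)) - real (card (Bset \<alpha> \<beta> K))"
    by simp
  have P: "real (card (Pset \<alpha> \<beta> K)) \<ge> (\<beta> - \<alpha>) * (real K * (real K + 1) / 2) - real K"
    by (rule Pset_card_lower)
  have B: "real (card (Bset \<alpha> \<beta> K)) \<le> 3/8 * (\<beta> - \<alpha>) * (real K)^2 + ((\<beta> - \<alpha>)/2 + 1) * real K * (2 * sqrt (real K))"
    using Bset_card_real[OF ab, of K] .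
  have Q: "(\<beta> - \<alpha>) * (real K * (real K + 1) / 2) \<ge> (\<beta> - \<alpha>) * (real K)^2 / 2"
  proof -
    have "(real K)^2 / 2 \<le> real K * (real K + 1) / 2" by (simp add: power2_eq_square field_simps)
    then show ?thesis using ab by (simp add: mult_left_mono)
  qed
  have "real (card (Gset \<alpha> \<beta> K)) \<ge> ((\<beta> - \<alpha>) * (real K)^2 / 2 - real K) - (3/8 * (\<beta> - \<alpha>) * (real K)^2 + ((\<beta> - \<alpha>)/2 + 1) * real K * (2 * sqrt (real K)))"
    unfolding G using P B Q by linarith
  also have "((\<beta> - \<alpha>) * (real K)^2 / 2 - real K) - (3/8 * (\<beta> - \<alpha>) * (real K)^2 + ((\<beta> - \<alpha>)/2 + 1) * real K * (2 * sqrt (real K)))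
     = (\<beta> - \<alpha>) * (real K)^2 / 8 - real K - ((\<beta> - \<alpha>) + 2) * real K * sqrt (real K)"
    by (simp add: field_simps)
  finally show ?thesis .
qed

lemma Gset_card_final:
  assumes L: "\<beta> - \<alpha> > 0" and K: "real K \<ge> (32 * ((\<beta> - \<alpha>) + 2) / (\<beta> - \<alpha>))^2"
  shows "real (card (Gset \<alpha> \<beta> K)) \<ge> (\<beta> - \<alpha>) * (real K)^2 / 16"
proof -
  define L where "L = \<beta> - \<alpha>"
  define s where "s = sqrt (real K)"
  have L0: "L > 0" using L unfolding L_def .
  have s0: "s \<ge> 0" unfolding s_def by simp
  have Ks: "real K = s^2" unfolding s_def by simp
  have q0: "32 * (L + 2) / L \<ge> 0" using L0 by simp
  have ss: "s \<ge> 32 * (L + 2) / L"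
    using K unfolding s_def L_def[symmetric] using q0 real_le_rsqrt by blast
  have "L * s \<ge> 32 * (L + 2)" using ss L0 by (simp add: field_simps)
  then have s1: "s \<ge> 1" using L0 by (smt (verit, best) mult_le_cancel_left1 ss divide_nonneg_pos)
  have A: "L * s / 16 \<ge> 2 * (L + 2)" using \<open>L * s \<ge> 32 * (L + 2)\<close> by simp
  have "L * s^2 / 16 = (L * s / 16) * s" by (simp add: power2_eq_square)
  also have "\<dots> \<ge> 2 * (L + 2) * s" using A s0 by (intro mult_right_mono) auto
  finally have B: "L * s^2 / 16 \<ge> 2 * (L + 2) * s" .
  have C: "(L + 2) * s \<ge> 1" using L0 s1 by (smt (verit) mult_le_cancel_right1)
  have D: "1 + (L + 2) * s \<le> L * s^2 / 16" using B C by linarith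
  have "L * (real K)^2 / 8 - real K - (L + 2) * real K * sqrt (real K) - L * (real K)^2 / 16
      = s^2 * (L * s^2 / 16 - 1 - (L + 2) * s)"
    unfolding Ks s_def[symmetric] using s0 by (simp add: algebra_simps power2_eq_square)
  also have "\<dots> \<ge> 0" using D by simp
  finally have "L * (real K)^2 / 8 - real K - (L + 2) * real K * sqrt (real K) \<ge> L * (real K)^2 / 16" by simp
  then show ?thesis using Gset_card_real[of \<alpha> \<beta> K] L unfolding L_def by simp
qed



definition goodcell :: "nat \<Rightarrow> nat \<Rightarrow> real \<Rightarrow> nat \<Rightarrow> nat \<Rightarrow> bool" where
  "goodcell n K r G' c \<longleftrightarrow> (\<exists>k\<in>{1..K}. \<exists>a::int.
      of_int a / (real n * real k) - r / (real n * real k) \<le> real c / real G' \<and>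
      (real c + 1) / real G' \<le> of_int a / (real n * real k) + r / (real n * real k))"

lemma reduced_eq:
  fixes k k' :: nat and a a' :: int
  assumes "coprime (int k) a" "coprime (int k') a'" "k > 0" "k' > 0" "a * int k' = a' * int k"
  shows "k = k' \<and> a = a'"
proof -
  have "int k dvd a * int k'" using assms(5) by simp
  then have d1: "int k dvd int k'" using assms(1) coprime_dvd_mult_right_iff by blast
  have "int k' dvd a' * int k" using assms(5)[symmetric] by simp
  then have d2: "int k' dvd int k" using assms(2) coprime_dvd_mult_right_iff by blast
  have "k dvd k'" using d1 by simp
  moreover have "k' dvd k" using d2 by simp
  ultimately have kk: "k = k'" by (rule dvd_antisym)
  then have "a * int k = a' * int k" using assms(5) by simp
  then have "a = a'" using assms(3) by simp
  then show ?thesis using kk by simp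
qed

lemma sep:
  fixes k k' n :: nat and a a' :: int
  assumes "coprime (int k) a" "coprime (int k') a'" "k > 0" "k' > 0" "n > 0" "\<not> (k = k' \<and> a = a')"
  shows "\<bar>of_int a / (real n * real k) - of_int a' / (real n * real k')\<bar> \<ge> 1 / (real n * real k * real k')"
proof -
  have ne: "a * int k' - a' * int k \<noteq> 0" using reduced_eq[OF assms(1-4)] assms(6) by auto
  then have "\<bar>a * int k' - a' * int k\<bar> \<ge> 1" by linarith
  then have "real_of_int \<bar>a * int k' - a' * int k\<bar> \<ge> 1" by linarith
  then have "\<bar>real_of_int (a * int k' - a' * int k)\<bar> \<ge> 1" by simp
  moreover have "of_int a / (real n * real k) - of_int a' / (real n * real k')
      = real_of_int (a * int k' - a' * int k) / (real n * real k * real k')"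
    using assms(3-5) by (simp add: field_simps)
  moreover have pos: "real n * real k * real k' > 0" using assms(3-5) by simp
  ultimately show ?thesis
    by (metis abs_div_pos divide_right_mono less_imp_le)
qed

lemma floor_half: "x \<ge> 1 \<Longrightarrow> real (nat \<lfloor>x\<rfloor>) \<ge> x / 2"
proof -
  assume x: "x \<ge> 1"
  have f0: "\<lfloor>x\<rfloor> \<ge> 1" using x by simp
  have "real (nat \<lfloor>x\<rfloor>) = of_int \<lfloor>x\<rfloor>" using f0 by simp
  moreover have "of_int \<lfloor>x\<rfloor> > x - 1" by (rule real_of_int_floor_gt_diff_one)
  moreover have "of_int \<lfloor>x\<rfloor> \<ge> (1::real)" using f0 by simp
  ultimately show ?thesis by linarith
qed

lemma block:
  fixes n K G M i :: nat and Hh :: real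
  assumes n3: "n \<ge> 3" and Hh: "Hh \<ge> 1/2" and G1: "G \<ge> 1" and K4: "real K \<ge> 4 * real G"
    and Kc: "real K \<ge> (32 * (1 + 4 * real G))^2" and M: "real M \<ge> 2 * Hh * (real n)^2 * (real K)^2"
    and i: "i < G"
  shows "real (card {c. c div M = i \<and> goodcell n K (1/(2*Hh*real n*real K)) (G*M) c})
           \<ge> real M / (128 * Hh * real n)"
proof -
  define r where "r = 1/(2*Hh*real n*real K)"
  define G' where "G' = G * M"
  define \<alpha> where "\<alpha> = real n * real i / real G + r"
  define \<beta> where "\<beta> = real n * (real i + 1) / real G - r"
  define X where "X = real G' * r / (real n * real K)"
  define S where "S = nat \<lfloor>X\<rfloor>"
  define xc where "xc = (\<lambda>k a. of_int a / (real n * real k) :: real)"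
  define rho where "rho = (\<lambda>k. r / (real n * real k))"
  define c0 where "c0 = (\<lambda>k a. nat \<lceil>real G' * (xc k a - rho k)\<rceil>)"
  define f where "f = (\<lambda>p. c0 (fst (fst p)) (snd (fst p)) + snd p)"
  define D where "D = Gset \<alpha> \<beta> K \<times> {0..<S}"
  define T where "T = {c. c div M = i \<and> goodcell n K r G' c}"
  have npos: "real n \<ge> 3" using n3 by simp
  have Hpos: "Hh > 0" using Hh by simp
  have Gpos: "real G \<ge> 1" using G1 by simp
  have Kbig: "real K \<ge> 4" using K4 Gpos by simp
  have Kpos: "real K > 0" using Kbig by simp
  have Mpos: "real M \<ge> 1"
  proof -
    have n9: "(real n)^2 \<ge> 3^2" using npos by (intro power_mono) auto
    have k16: "(real K)^2 \<ge> 4^2" using Kbig by (intro power_mono) auto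
    have "2 * Hh * (real n)^2 * (real K)^2 \<ge> 1 * 9 * 16"
      using Hh n9 k16 by (intro mult_mono) auto
    then have "real M \<ge> 1 * 9 * 16" using M by linarith
    then show ?thesis by linarith
  qed
  have M0: "M > 0" using Mpos by simp
  have G'pos: "real G' > 0" unfolding G'_def using Gpos Mpos by simp
  have rpos: "r > 0" unfolding r_def using Hpos npos Kpos by simp
  have Hn: "2 * Hh * real n \<ge> 3"
  proof -
    have "(2 * Hh) * real n \<ge> 1 * real n" using Hh npos by (intro mult_right_mono) auto
    then show ?thesis using npos by linarith
  qed
  have r_le: "r \<le> 1 / real K"
    unfolding r_def using Hn Kpos by (simp add: field_simps)
  have rK: "2 * real K * r \<le> 2/3"
    unfolding r_def using Hn Kpos by (simp add: field_simps)
  have r_le2: "r \<le> 1 / (4 * real G)"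
    using r_le K4 Gpos Kpos by (smt (verit) frac_le)
  have L: "\<beta> - \<alpha> \<ge> real n / (2 * real G)"
  proof -
    have "\<beta> - \<alpha> = real n / real G - 2 * r" unfolding \<alpha>_def \<beta>_def using Gpos by (simp add: field_simps)
    moreover have "2 * r \<le> real n / (2 * real G)"
    proof -
      have "2 * r \<le> 1 / (2 * real G)" using r_le2 Gpos by (simp add: field_simps)
      also have "\<dots> \<le> real n / (2 * real G)" using npos Gpos by (intro divide_right_mono) auto
      finally show ?thesis .
    qed
    moreover have "real n / real G - real n / (2 * real G) = real n / (2 * real G)"
      using Gpos by (simp add: field_simps)
    ultimately show ?thesis by linarith
  qed
  have Lpos: "\<beta> - \<alpha> > 0" using L npos Gpos by (smt (verit) divide_pos_pos)
  have Kcount: "real K \<ge> (32 * ((\<beta> - \<alpha>) + 2) / (\<beta> - \<alpha>))^2"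
  proof -
    have "32 * ((\<beta> - \<alpha>) + 2) / (\<beta> - \<alpha>) = 32 + 64 / (\<beta> - \<alpha>)"
      using Lpos by (simp add: field_simps)
    also have "64 / (\<beta> - \<alpha>) \<le> 64 / (real n / (2 * real G))"
      using L Lpos npos Gpos by (intro divide_left_mono) auto
    also have "64 / (real n / (2 * real G)) = 128 * real G / real n" using npos Gpos by (simp add: field_simps)
    also have "\<dots> \<le> 128 * real G" using npos Gpos by (simp add: field_simps)
    finally have "32 * ((\<beta> - \<alpha>) + 2) / (\<beta> - \<alpha>) \<le> 32 * (1 + 4 * real G)" by simp
    moreover have "32 * ((\<beta> - \<alpha>) + 2) / (\<beta> - \<alpha>) \<ge> 0" using Lpos by simp
    ultimately have "(32 * ((\<beta> - \<alpha>) + 2) / (\<beta> - \<alpha>))^2 \<le> (32 * (1 + 4 * real G))^2"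
      by (intro power_mono) auto
    then show ?thesis using Kc by linarith
  qed
  have Gc: "real (card (Gset \<alpha> \<beta> K)) \<ge> real n * (real K)^2 / (32 * real G)"
  proof -
    have "real (card (Gset \<alpha> \<beta> K)) \<ge> (\<beta> - \<alpha>) * (real K)^2 / 16"
      using Gset_card_final[OF Lpos Kcount] .
    moreover have "(\<beta> - \<alpha>) * (real K)^2 / 16 \<ge> real n / (2 * real G) * (real K)^2 / 16"
      using L by (intro divide_right_mono mult_right_mono) auto
    moreover have "real n / (2 * real G) * (real K)^2 / 16 = real n * (real K)^2 / (32 * real G)"
      by (simp add: field_simps)
    ultimately show ?thesis by linarith
  qed
  have Xeq: "X = real G * real M / (2 * Hh * (real n)^2 * (real K)^2)"
    unfolding X_def G'_def r_def using npos Kpos Hpos by (simp add: field_simps power2_eq_square)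
  have X1: "X \<ge> 1"
  proof -
    have d: "2 * Hh * (real n)^2 * (real K)^2 > 0" using Hpos npos Kpos by simp
    have "real G * real M \<ge> 1 * (2 * Hh * (real n)^2 * (real K)^2)"
      using Gpos M d by (intro mult_mono) auto
    then show ?thesis unfolding Xeq using d by (simp add: field_simps)
  qed
  have S2: "real S \<ge> X / 2" unfolding S_def using floor_half[OF X1] .
  have S1: "real S + 1 \<le> 2 * X"
  proof -
    have "real S \<le> X" unfolding S_def using X1 by (simp add: of_nat_nat)
    then show ?thesis using X1 by linarith
  qed
  have props: "real G' * (xc k a - rho k) \<ge> real M * real i \<and> real G' * (xc k a + rho k) \<le> real M * (real i + 1)
      \<and> real G' * (xc k a + rho k) - real G' * (xc k a - rho k) \<ge> 2 * X"
    if ka: "(k, a) \<in> Gset \<alpha> \<beta> K" for k a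
  proof -
    from ka have k1: "1 \<le> k" and kK: "k \<le> K" and T1: "\<alpha> * real k \<le> of_int a" and T2: "of_int a \<le> \<beta> * real k"
      unfolding Gset_def Pset_def Tset_def by auto
    have kpos: "real k \<ge> 1" using k1 by simp
    have nk: "real n * real k > 0" using npos kpos by simp
    have rho_le: "rho k \<le> r / real n"
      unfolding rho_def using rpos npos kpos by (simp add: field_simps)
    have rho_ge: "rho k \<ge> r / (real n * real K)"
      unfolding rho_def using rpos npos kpos kK by (intro divide_left_mono) (auto intro: mult_left_mono)
    have a1: "xc k a \<ge> real i / real G + r / real n"
    proof -
      have "(real n * real i / real G + r) * real k \<le> of_int a" using T1 unfolding \<alpha>_def .
      then have "(real n * real i / real G + r) * real k / (real n * real k) \<le> of_int a / (real n * real k)"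
        using nk by (intro divide_right_mono) auto
      moreover have "(real n * real i / real G + r) * real k / (real n * real k) = real i / real G + r / real n"
        using nk npos kpos Gpos by (simp add: field_simps)
      ultimately show ?thesis unfolding xc_def by simp
    qed
    have a2: "xc k a \<le> (real i + 1) / real G - r / real n"
    proof -
      have "of_int a \<le> (real n * (real i + 1) / real G - r) * real k" using T2 unfolding \<beta>_def .
      then have "of_int a / (real n * real k) \<le> (real n * (real i + 1) / real G - r) * real k / (real n * real k)"
        using nk by (intro divide_right_mono) auto
      moreover have "(real n * (real i + 1) / real G - r) * real k / (real n * real k) = (real i + 1) / real G - r / real n"
        using nk npos kpos Gpos by (simp add: field_simps)
      ultimately show ?thesis unfolding xc_def by simp
    qed
    have "xc k a - rho k \<ge> real i / real G" using a1 rho_le by linarith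
    then have p1: "real G' * (xc k a - rho k) \<ge> real G' * (real i / real G)" using G'pos by (intro mult_left_mono) auto
    have "xc k a + rho k \<le> (real i + 1) / real G" using a2 rho_le by linarith
    then have p2: "real G' * (xc k a + rho k) \<le> real G' * ((real i + 1) / real G)" using G'pos by (intro mult_left_mono) auto
    have e1: "real G' * (real i / real G) = real M * real i" unfolding G'_def using Gpos by simp
    have e2: "real G' * ((real i + 1) / real G) = real M * (real i + 1)" unfolding G'_def using Gpos by simp
    have "real G' * (xc k a + rho k) - real G' * (xc k a - rho k) = 2 * (real G' * rho k)" by (simp add: algebra_simps)
    moreover have "real G' * rho k \<ge> real G' * (r / (real n * real K))" using rho_ge G'pos by (intro mult_left_mono) auto
    moreover have "real G' * (r / (real n * real K)) = X" unfolding X_def by simp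
    ultimately have p3: "real G' * (xc k a + rho k) - real G' * (xc k a - rho k) \<ge> 2 * X" by linarith
    show ?thesis using p1 p2 p3 e1 e2 by simp
  qed
  have inside: "real G' * (xc (fst (fst p)) (snd (fst p)) - rho (fst (fst p))) \<le> real (f p) \<and>
      real (f p) + 1 \<le> real G' * (xc (fst (fst p)) (snd (fst p)) + rho (fst (fst p)))"
    if p: "p \<in> D" for p
  proof -
    obtain k a s where pe: "p = ((k, a), s)" by (metis prod.collapse)
    from p have ka: "(k, a) \<in> Gset \<alpha> \<beta> K" and sS: "s < S" unfolding D_def pe by auto
    define u where "u = real G' * (xc k a - rho k)"
    define v where "v = real G' * (xc k a + rho k)"
    have pr: "u \<ge> real M * real i" "v \<le> real M * (real i + 1)" "v - u \<ge> 2 * X"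
      using props[OF ka] unfolding u_def v_def by auto
    have "real M * real i \<ge> 0" by simp
    then have u0: "u \<ge> 0" using pr(1) by linarith
    have c0e: "real (c0 k a) = of_int \<lceil>u\<rceil>" unfolding c0_def u_def[symmetric] using u0 by simp
    have c0a: "real (c0 k a) \<ge> u" unfolding c0e by (rule le_of_int_ceiling)
    have c0b: "real (c0 k a) \<le> u + 1" unfolding c0e by (rule of_int_ceiling_le_add_one)
    have fp: "f p = c0 k a + s" unfolding f_def pe by simp
    have "real s + 1 \<le> real S" using sS by linarith
    then have "real (f p) + 1 \<le> u + 1 + real S" unfolding fp using c0b by simp
    also have "\<dots> \<le> v" using S1 pr(3) by linarith
    finally have h2: "real (f p) + 1 \<le> v" .
    have h1: "u \<le> real (f p)" unfolding fp using c0a by simp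
    show ?thesis using h1 h2 unfolding pe u_def v_def by simp
  qed
  have memT: "f p \<in> T" if p: "p \<in> D" for p
  proof -
    obtain k a s where pe: "p = ((k, a), s)" by (metis prod.collapse)
    from p have ka: "(k, a) \<in> Gset \<alpha> \<beta> K" unfolding D_def pe by auto
    from ka have k1: "1 \<le> k" and kK: "k \<le> K" unfolding Gset_def Pset_def by auto
    have ins: "real G' * (xc k a - rho k) \<le> real (f p)" "real (f p) + 1 \<le> real G' * (xc k a + rho k)"
      using inside[OF p] unfolding pe by auto
    have pr: "real G' * (xc k a - rho k) \<ge> real M * real i" "real G' * (xc k a + rho k) \<le> real M * (real i + 1)"
      using props[OF ka] by auto
    have "real (M * i) \<le> real (f p)" using ins(1) pr(1) by simp
    then have d1: "M * i \<le> f p" by (simp only: of_nat_le_iff)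
    have "real (M * Suc i) = real M * (real i + 1)" by (simp add: algebra_simps)
    then have "real (f p) + 1 \<le> real (M * Suc i)" using ins(2) pr(2) by linarith
    then have d2: "f p < M * Suc i" by linarith
    have div: "f p div M = i" using d1 d2 by (rule div_nat_eqI)
    have g1: "xc k a - rho k \<le> real (f p) / real G'"
      using ins(1) G'pos by (simp add: field_simps mult.commute)
    have g2: "(real (f p) + 1) / real G' \<le> xc k a + rho k"
      using ins(2) G'pos by (simp add: field_simps mult.commute)
    have "goodcell n K r G' (f p)"
      unfolding goodcell_def using g1 g2 k1 kK unfolding xc_def rho_def by auto
    then show ?thesis unfolding T_def using div by simp
  qed
  have injf: "inj_on f D"
  proof (rule inj_onI)
    fix p q assume p: "p \<in> D" and q: "q \<in> D" and e: "f p = f q"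
    obtain k a s where pe: "p = ((k, a), s)" by (metis prod.collapse)
    obtain k' a' s' where qe: "q = ((k', a'), s')" by (metis prod.collapse)
    from p have ka: "(k, a) \<in> Gset \<alpha> \<beta> K" unfolding D_def pe by auto
    from q have ka': "(k', a') \<in> Gset \<alpha> \<beta> K" unfolding D_def qe by auto
    from ka have k1: "1 \<le> k" and kK: "k \<le> K" and cp: "coprime (int k) a" unfolding Gset_def Pset_def by auto
    from ka' have k1': "1 \<le> k'" and kK': "k' \<le> K" and cp': "coprime (int k') a'" unfolding Gset_def Pset_def by auto
    define c where "c = f p"
    have i1: "real G' * (xc k a - rho k) \<le> real c" "real c + 1 \<le> real G' * (xc k a + rho k)"
      using inside[OF p] unfolding pe c_def by auto
    have i2: "real G' * (xc k' a' - rho k') \<le> real c" "real c + 1 \<le> real G' * (xc k' a' + rho k')"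
      using inside[OF q] e unfolding qe c_def by auto
    have b1: "\<bar>xc k a - real c / real G'\<bar> \<le> rho k"
    proof -
      have "xc k a - rho k \<le> real c / real G'" using i1(1) G'pos by (simp add: field_simps mult.commute)
      moreover have "real c / real G' \<le> xc k a + rho k"
      proof -
        have "real c \<le> real G' * (xc k a + rho k)" using i1(2) by linarith
        then show ?thesis using G'pos by (simp add: field_simps mult.commute)
      qed
      ultimately show ?thesis by linarith
    qed
    have b2: "\<bar>xc k' a' - real c / real G'\<bar> \<le> rho k'"
    proof -
      have "xc k' a' - rho k' \<le> real c / real G'" using i2(1) G'pos by (simp add: field_simps mult.commute)
      moreover have "real c / real G' \<le> xc k' a' + rho k'"
      proof -
        have "real c \<le> real G' * (xc k' a' + rho k')" using i2(2) by linarith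
        then show ?thesis using G'pos by (simp add: field_simps mult.commute)
      qed
      ultimately show ?thesis by linarith
    qed
    have same: "k = k' \<and> a = a'"
    proof (rule ccontr)
      assume ne: "\<not> (k = k' \<and> a = a')"
      have sp: "\<bar>xc k a - xc k' a'\<bar> \<ge> 1 / (real n * real k * real k')"
        unfolding xc_def using sep[OF cp cp' _ _ _ ne] k1 k1' n3 by simp
      have "\<bar>xc k a - xc k' a'\<bar> \<le> rho k + rho k'" using b1 b2 by linarith
      also have "rho k + rho k' = r * (real k + real k') / (real n * real k * real k')"
        unfolding rho_def using k1 k1' npos by (simp add: field_simps)
      also have "\<dots> < 1 / (real n * real k * real k')"
      proof -
        have "r * (real k + real k') \<le> r * (2 * real K)" using kK kK' rpos by (intro mult_left_mono) auto
        then have "r * (real k + real k') < 1" using rK by (simp add: algebra_simps)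
        moreover have "real n * real k * real k' > 0" using k1 k1' npos by simp
        ultimately show ?thesis by (simp add: divide_strict_right_mono)
      qed
      finally show False using sp by linarith
    qed
    then have "s = s'" using e unfolding pe qe f_def by simp
    then show "p = q" using same pe qe by simp
  qed
  have finT: "finite T"
  proof -
    have "T \<subseteq> {..< Suc i * M}"
    proof
      fix c assume "c \<in> T"
      then have "c div M < Suc i" unfolding T_def by simp
      then show "c \<in> {..< Suc i * M}" using M0 by (simp add: div_less_iff_less_mult)
    qed
    then show ?thesis by (rule finite_subset) simp
  qed
  have "card (f ` D) \<le> card T" using memT finT by (intro card_mono) auto
  moreover have "card (f ` D) = card D" using injf by (rule card_image)
  moreover have "card D = card (Gset \<alpha> \<beta> K) * S" unfolding D_def by (simp add: card_cartesian_product)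
  ultimately have cT: "real (card T) \<ge> real (card (Gset \<alpha> \<beta> K)) * real S" by (metis of_nat_le_iff of_nat_mult)
  have "real (card (Gset \<alpha> \<beta> K)) * real S \<ge> (real n * (real K)^2 / (32 * real G)) * (X / 2)"
    using Gc S2 X1 by (intro mult_mono) auto
  moreover have "(real n * (real K)^2 / (32 * real G)) * (X / 2) = real M / (128 * Hh * real n)"
    unfolding Xeq using Gpos npos Kpos Hpos by (simp add: field_simps power2_eq_square)
  ultimately show ?thesis using cT unfolding T_def r_def G'_def by linarith
qed



fun Dset :: "(nat \<Rightarrow> nat) \<Rightarrow> (nat \<Rightarrow> nat) \<Rightarrow> (nat \<Rightarrow> nat \<Rightarrow> bool) \<Rightarrow> nat \<Rightarrow> nat \<Rightarrow> nat set" where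
  "Dset Gs Ms good m 0 = {0}"
| "Dset Gs Ms good m (Suc N) = {c'. c' < Gs (Suc N) \<and> c' div Ms (Suc N) \<in> Dset Gs Ms good m N \<and>
      (m \<le> Suc N \<longrightarrow> \<not> good (Suc N) c')}"

lemma div_block: "(M::nat) > 0 \<Longrightarrow> {c'. c' div M = c} = {M*c..<M*c+M}"
proof (intro set_eqI iffI)
  fix c' assume M: "M > 0" and "c' \<in> {c'. c' div M = c}"
  then have e: "c' div M = c" by simp
  have "M * (c' div M) \<le> c'" by simp
  moreover have "c' < M * (c' div M) + M" using M
    by (metis add.commute div_mult_mod_eq mod_less_divisor nat_add_left_cancel_less mult.commute)
  ultimately show "c' \<in> {M*c..<M*c+M}" using e by simp
next
  fix c' assume M: "M > 0" and "c' \<in> {M*c..<M*c+M}"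
  then show "c' \<in> {c'. c' div M = c}" by (auto intro!: div_nat_eqI)
qed

locale cover_setup =
  fixes Gs Ms :: "nat \<Rightarrow> nat" and good :: "nat \<Rightarrow> nat \<Rightarrow> bool" and q :: "nat \<Rightarrow> real"
  assumes Gs0: "Gs 0 = 1"
    and GsS: "\<And>n. Gs (Suc n) = Gs n * Ms (Suc n)"
    and Mpos: "\<And>n. Ms n > 0"
    and q01: "\<And>n. 0 \<le> q n \<and> q n \<le> 1"
    and blockc: "\<And>n i. n \<ge> 3 \<Longrightarrow> i < Gs (n - 1) \<Longrightarrow>
        real (card {c. c div Ms n = i \<and> good n c}) \<ge> q n * real (Ms n)"
    and diverge: "\<And>m B. \<exists>N. (\<Sum>n\<in>{m..N}. q n) \<ge> B"
begin

lemma Gs_pos: "Gs n > 0"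
  by (induction n) (auto simp: Gs0 GsS Mpos)

lemma Dset_sub: "Dset Gs Ms good m N \<subseteq> {..<Gs N}"
  by (cases N) (auto simp: Gs0)

lemma Dset_finite: "finite (Dset Gs Ms good m N)"
  using Dset_sub finite_subset by blast

lemma C1:
  assumes x: "0 \<le> x" "x < 1"
  shows "(\<forall>n. m \<le> n \<and> n \<le> N \<longrightarrow> \<not> good n (nat \<lfloor>real (Gs n) * x\<rfloor>)) \<Longrightarrow>
         nat \<lfloor>real (Gs N) * x\<rfloor> \<in> Dset Gs Ms good m N"
proof (induction N)
  case 0
  have "\<lfloor>x\<rfloor> = 0" using x by (simp add: floor_eq_iff)
  then show ?case by (simp add: Gs0)
next
  case (Suc N)
  have IH: "nat \<lfloor>real (Gs N) * x\<rfloor> \<in> Dset Gs Ms good m N" using Suc by auto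
  define t where "t = \<lfloor>real (Gs (Suc N)) * x\<rfloor>"
  have t0: "t \<ge> 0" unfolding t_def using x by simp
  have tlt: "nat t < Gs (Suc N)"
  proof -
    have "real (Gs (Suc N)) * x < real (Gs (Suc N))" using x Gs_pos[of "Suc N"] by simp
    then have "t < int (Gs (Suc N))" unfolding t_def by (simp add: floor_less_iff)
    then show ?thesis using t0 by simp
  qed
  have Mp: "Ms (Suc N) > 0" by (rule Mpos)
  have "\<lfloor>real (Gs (Suc N)) * x / real_of_int (int (Ms (Suc N)))\<rfloor> = t div int (Ms (Suc N))"
    unfolding t_def by (rule floor_divide_real_eq_div) simp
  moreover have "real (Gs (Suc N)) * x / real_of_int (int (Ms (Suc N))) = real (Gs N) * x"
    using Mp by (simp add: GsS)
  ultimately have e: "\<lfloor>real (Gs N) * x\<rfloor> = t div int (Ms (Suc N))" by simp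
  have "nat t div Ms (Suc N) = nat (t div int (Ms (Suc N)))" using t0 by (simp add: nat_div_distrib)
  also have "\<dots> = nat \<lfloor>real (Gs N) * x\<rfloor>" using e by simp
  finally have d: "nat t div Ms (Suc N) = nat \<lfloor>real (Gs N) * x\<rfloor>" .
  have ng: "m \<le> Suc N \<longrightarrow> \<not> good (Suc N) (nat t)" using Suc.prems unfolding t_def by auto
  show ?case using tlt d IH ng unfolding t_def by simp
qed

lemma C2:
  assumes m3: "m \<ge> 3"
  shows "real (card (Dset Gs Ms good m (Suc N))) \<le>
     (1 - (if m \<le> Suc N then q (Suc N) else 0)) * real (Ms (Suc N)) * real (card (Dset Gs Ms good m N))"
proof -
  define M where "M = Ms (Suc N)"
  define D where "D = Dset Gs Ms good m N"
  define qq where "qq = (if m \<le> Suc N then q (Suc N) else 0)"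
  define Bl where "Bl = (\<lambda>c. {c'. c' div M = c \<and> (m \<le> Suc N \<longrightarrow> \<not> good (Suc N) c')})"
  have M0: "M > 0" unfolding M_def by (rule Mpos)
  have sub: "Dset Gs Ms good m (Suc N) \<subseteq> (\<Union>c\<in>D. Bl c)"
    unfolding D_def Bl_def M_def by auto
  have Afin: "finite {c'. c' div M = c}" for c using div_block[OF M0] by simp
  have Bfin: "finite (Bl c)" for c
    by (rule finite_subset[OF _ Afin[of c]]) (auto simp: Bl_def)
  have Acard: "card {c'. c' div M = c} = M" for c using div_block[OF M0] by simp
  have Bc: "real (card (Bl c)) \<le> (1 - qq) * real M" if c: "c \<in> D" for c
  proof (cases "m \<le> Suc N")
    case True
    define Gd where "Gd = {c'. c' div M = c \<and> good (Suc N) c'}"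
    have BA: "Bl c = {c'. c' div M = c} - Gd" unfolding Bl_def Gd_def using True by auto
    have GA: "Gd \<subseteq> {c'. c' div M = c}" unfolding Gd_def by auto
    have cG: "c < Gs (Suc N - 1)" using c Dset_sub unfolding D_def by auto
    have "real (card Gd) \<ge> q (Suc N) * real M"
      unfolding Gd_def M_def using blockc[of "Suc N" c] cG m3 True by simp
    moreover have "card (Bl c) = M - card Gd"
      unfolding BA using card_Diff_subset[OF finite_subset[OF GA Afin] GA] Acard by simp
    moreover have "card Gd \<le> M" using card_mono[OF Afin GA] Acard by simp
    ultimately show ?thesis unfolding qq_def using True by (simp add: of_nat_diff algebra_simps)
  next
    case False
    have "Bl c = {c'. c' div M = c}" unfolding Bl_def using False by auto
    then show ?thesis unfolding qq_def using False Acard by simp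
  qed
  have "card (Dset Gs Ms good m (Suc N)) \<le> card (\<Union>c\<in>D. Bl c)"
    using sub Dset_finite Bfin unfolding D_def by (intro card_mono) auto
  also have "\<dots> \<le> (\<Sum>c\<in>D. card (Bl c))" by (rule card_UN_le) (simp add: D_def Dset_finite)
  finally have "real (card (Dset Gs Ms good m (Suc N))) \<le> (\<Sum>c\<in>D. real (card (Bl c)))"
    by (metis of_nat_le_iff of_nat_sum)
  also have "\<dots> \<le> (\<Sum>c\<in>D. (1 - qq) * real M)" using Bc by (rule sum_mono)
  also have "\<dots> = (1 - qq) * real M * real (card D)" by simp
  finally show ?thesis unfolding qq_def M_def D_def .
qed

lemma C3:
  assumes m3: "m \<ge> 3"
  shows "real (card (Dset Gs Ms good m N)) / real (Gs N) \<le> (\<Prod>n\<in>{1..N}. (1 - (if m \<le> n then q n else 0)))"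
proof (induction N)
  case 0 then show ?case by (simp add: Gs0)
next
  case (Suc N)
  define qq where "qq = (if m \<le> Suc N then q (Suc N) else 0)"
  have q1: "0 \<le> 1 - qq" unfolding qq_def using q01 by auto
  have Gp: "real (Gs N) > 0" using Gs_pos by simp
  have Mp: "real (Ms (Suc N)) > 0" using Mpos by simp
  have "real (card (Dset Gs Ms good m (Suc N))) / real (Gs (Suc N))
        \<le> (1 - qq) * real (Ms (Suc N)) * real (card (Dset Gs Ms good m N)) / (real (Gs N) * real (Ms (Suc N)))"
    using C2[OF m3, of N] Gp Mp unfolding qq_def GsS of_nat_mult by (intro divide_right_mono) auto
  also have "\<dots> = (1 - qq) * (real (card (Dset Gs Ms good m N)) / real (Gs N))"
    using Gp Mp by (simp add: field_simps)
  also have "\<dots> \<le> (1 - qq) * (\<Prod>n\<in>{1..N}. (1 - (if m \<le> n then q n else 0)))"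
    using Suc q1 by (intro mult_left_mono) auto
  also have "\<dots> = (\<Prod>n\<in>{1..Suc N}. (1 - (if m \<le> n then q n else 0)))"
    unfolding qq_def by (simp add: prod.cl_ivl_Suc mult.commute)
  finally show ?case .
qed

lemma prod_exp:
  fixes a :: "nat \<Rightarrow> real"
  assumes "\<And>n. 0 \<le> a n \<and> a n \<le> 1"
  shows "(\<Prod>n\<in>A. (1 - a n)) \<le> exp (- (\<Sum>n\<in>A. a n))"
proof (cases "finite A")
  case True
  have "(\<Prod>n\<in>A. (1 - a n)) \<le> (\<Prod>n\<in>A. exp (- a n))"
  proof (rule prod_mono)
    fix n assume "n \<in> A"
    show "0 \<le> 1 - a n \<and> 1 - a n \<le> exp (- a n)" using assms[of n] exp_ge_add_one_self[of "- a n"] by simp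
  qed
  also have "\<dots> = exp (- (\<Sum>n\<in>A. a n))" using True by (simp add: exp_sum[symmetric] sum_negf)
  finally show ?thesis .
qed simp

definition Sset :: "nat \<Rightarrow> nat \<Rightarrow> real set" where
  "Sset m N = (\<Union>c\<in>Dset Gs Ms good m N. {real c / real (Gs N) ..< (real c + 1) / real (Gs N)})"

lemma Sset_sets: "Sset m N \<in> sets lborel"
  unfolding Sset_def using Dset_finite
  by (intro sets.finite_UN) (auto simp: atLeastLessThan_borel)

lemma Sset_measure: "emeasure lborel (Sset m N) \<le> ennreal (real (card (Dset Gs Ms good m N)) / real (Gs N))"
proof -
  have Gp: "real (Gs N) > 0" using Gs_pos by simp
  have "emeasure lborel (Sset m N) \<le> (\<Sum>c\<in>Dset Gs Ms good m N. emeasure lborel {real c / real (Gs N) ..< (real c + 1) / real (Gs N)})"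
    unfolding Sset_def using Dset_finite by (intro emeasure_subadditive_finite) (auto simp: atLeastLessThan_borel)
  also have "\<dots> = (\<Sum>c\<in>Dset Gs Ms good m N. ennreal (1 / real (Gs N)))"
  proof (rule sum.cong)
    fix c
    have le: "real c / real (Gs N) \<le> (real c + 1) / real (Gs N)" using Gp by (simp add: divide_right_mono)
    have "(real c + 1) / real (Gs N) - real c / real (Gs N) = 1 / real (Gs N)" using Gp by (simp add: field_simps)
    then show "emeasure lborel {real c / real (Gs N) ..< (real c + 1) / real (Gs N)} = ennreal (1 / real (Gs N))"
      using emeasure_lborel_Ico[OF le] by simp
  qed simp
  also have "\<dots> = ennreal (real (card (Dset Gs Ms good m N)) / real (Gs N))"
    using Gp by (subst sum_ennreal) auto
  finally show ?thesis .
qed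

lemma in_Sset:
  assumes x: "0 \<le> x" "x < 1" and d: "nat \<lfloor>real (Gs N) * x\<rfloor> \<in> Dset Gs Ms good m N"
  shows "x \<in> Sset m N"
proof -
  define c where "c = nat \<lfloor>real (Gs N) * x\<rfloor>"
  have Gp: "real (Gs N) > 0" using Gs_pos by simp
  have f0: "\<lfloor>real (Gs N) * x\<rfloor> \<ge> 0" using x Gp by simp
  have rc: "real c = of_int \<lfloor>real (Gs N) * x\<rfloor>" unfolding c_def using f0 by simp
  have a: "real c \<le> real (Gs N) * x" unfolding rc by (rule of_int_floor_le)
  have b: "real (Gs N) * x < real c + 1" unfolding rc by (rule real_of_int_floor_add_one_gt)
  have "real c / real (Gs N) \<le> x" using a Gp by (simp add: field_simps mult.commute)
  moreover have "x < (real c + 1) / real (Gs N)" using b Gp by (simp add: field_simps mult.commute)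
  ultimately show ?thesis unfolding Sset_def using d c_def by auto
qed

lemma Z_null:
  assumes m3: "m \<ge> 3"
  shows "(\<Inter>N. Sset m N) \<in> null_sets lborel"
proof -
  have meas: "(\<Inter>N. Sset m N) \<in> sets lborel"
    using Sset_sets by (intro sets.countable_INT) auto
  have "emeasure lborel (\<Inter>N. Sset m N) \<le> 0"
  proof (rule ennreal_le_epsilon)
    fix e :: real assume e: "0 < e"
    obtain N where N: "(\<Sum>n\<in>{m..N}. q n) \<ge> - ln e" using diverge by blast
    define q' where "q' = (\<lambda>n. if m \<le> n then q n else 0)"
    have q'01: "0 \<le> q' n \<and> q' n \<le> 1" for n unfolding q'_def using q01 by auto
    have ss: "(\<Sum>n\<in>{1..N}. q' n) = (\<Sum>n\<in>{m..N}. q n)"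
    proof -
      have "(\<Sum>n\<in>{1..N}. q' n) = (\<Sum>n\<in>{n\<in>{1..N}. m \<le> n}. q n)"
        unfolding q'_def by (rule sum.inter_filter[symmetric]) simp
      moreover have "{n\<in>{1..N}. m \<le> n} = {m..N}" using m3 by auto
      ultimately show ?thesis by simp
    qed
    have "emeasure lborel (\<Inter>N. Sset m N) \<le> emeasure lborel (Sset m N)"
      using Sset_sets by (intro emeasure_mono) auto
    also have "\<dots> \<le> ennreal (real (card (Dset Gs Ms good m N)) / real (Gs N))" by (rule Sset_measure)
    also have "\<dots> \<le> ennreal e"
    proof (rule ennreal_leI)
      have "real (card (Dset Gs Ms good m N)) / real (Gs N) \<le> (\<Prod>n\<in>{1..N}. (1 - q' n))"
        using C3[OF m3, of N] unfolding q'_def .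
      also have "\<dots> \<le> exp (- (\<Sum>n\<in>{1..N}. q' n))" using q'01 by (intro prod_exp) auto
      also have "\<dots> \<le> exp (ln e)" unfolding ss using N by simp
      also have "\<dots> = e" using e by simp
      finally show "real (card (Dset Gs Ms good m N)) / real (Gs N) \<le> e" .
    qed
    finally show "emeasure lborel (\<Inter>N. Sset m N) \<le> 0 + ennreal e" by simp
  qed
  then have "emeasure lborel (\<Inter>N. Sset m N) = 0" by simp
  then show ?thesis using meas by (simp add: null_sets_def)
qed

theorem cover_main: "AE x in lborel. x \<in> {0..<1} \<longrightarrow> (\<forall>m. \<exists>n\<ge>m. good n (nat \<lfloor>real (Gs n) * x\<rfloor>))"
proof (rule AE_I')
  show "(\<Union>m. \<Inter>N. Sset (m + 3) N) \<in> null_sets lborel"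
    using Z_null by (intro null_sets_UN) auto
next
  show "{x \<in> space lborel. \<not> (x \<in> {0..<1} \<longrightarrow> (\<forall>m. \<exists>n\<ge>m. good n (nat \<lfloor>real (Gs n) * x\<rfloor>)))}
        \<subseteq> (\<Union>m. \<Inter>N. Sset (m + 3) N)"
  proof
    fix x assume "x \<in> {x \<in> space lborel. \<not> (x \<in> {0..<1} \<longrightarrow> (\<forall>m. \<exists>n\<ge>m. good n (nat \<lfloor>real (Gs n) * x\<rfloor>)))}"
    then have x: "0 \<le> x" "x < 1" and m: "\<exists>m. \<forall>n\<ge>m. \<not> good n (nat \<lfloor>real (Gs n) * x\<rfloor>)" by auto
    then obtain m where m: "\<forall>n\<ge>m. \<not> good n (nat \<lfloor>real (Gs n) * x\<rfloor>)" by blast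
    have "x \<in> Sset (m + 3) N" for N
    proof -
      have "\<forall>n. m + 3 \<le> n \<and> n \<le> N \<longrightarrow> \<not> good n (nat \<lfloor>real (Gs n) * x\<rfloor>)" using m by auto
      then have "nat \<lfloor>real (Gs N) * x\<rfloor> \<in> Dset Gs Ms good (m + 3) N" using C1[OF x] by blast
      then show ?thesis using in_Sset[OF x] by blast
    qed
    then show "x \<in> (\<Union>m. \<Inter>N. Sset (m + 3) N)" by blast
  qed
qed

end



lemma ln_ge_half: "n \<ge> 3 \<Longrightarrow> ln (real n) \<ge> 1/2"
proof -
  assume n: "n \<ge> 3"
  have "ln (2::real) \<le> ln (real n)" using n by simp
  then show ?thesis using ln2_ge_two_thirds by linarith
qed

definition fL :: "nat \<Rightarrow> real" where
  "fL n = 1 / (real (max n 3) * ln (real (max n 3)))"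

lemma fL_nonneg: "fL n \<ge> 0"
proof -
  have "ln (real (max n 3)) \<ge> 1/2" using ln_ge_half[of "max n 3"] by simp
  then show ?thesis unfolding fL_def by simp
qed

lemma fL_mono: "fL (Suc m) \<le> fL m"
proof -
  define a where "a = real (max m 3)"
  define b where "b = real (max (Suc m) 3)"
  have a3: "a \<ge> 3" unfolding a_def by simp
  have ab: "a \<le> b" unfolding a_def b_def by simp
  have la: "ln a \<ge> 1/2" unfolding a_def using ln_ge_half[of "max m 3"] by simp
  have lab: "ln a \<le> ln b" using ab a3 by simp
  have "a * ln a \<le> b * ln b" using ab lab a3 la by (intro mult_mono) auto
  moreover have "a * ln a > 0" using a3 la by simp
  ultimately have "1 / (b * ln b) \<le> 1 / (a * ln a)" by (intro divide_left_mono) auto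
  then show ?thesis unfolding fL_def a_def b_def .
qed

lemma fL_not_summable: "\<not> summable fL"
proof
  assume s: "summable fL"
  have "summable (\<lambda>k. 2^k * fL (2^k))"
    using s condensation_test[of fL] fL_mono fL_nonneg by blast
  moreover have "norm (1 / (real k * ln 2)) \<le> 2^k * fL (2^k)" if k: "k \<ge> 2" for k
  proof -
    have "(2::nat)^k \<ge> 2^2" using k by (intro power_increasing) auto
    then have m: "max ((2::nat)^k) 3 = 2^k" by simp
    have "2^k * fL (2^k) = 2^k * (1 / (2^k * ln (2^k)))" unfolding fL_def m by simp
    also have "\<dots> = 1 / (real k * ln 2)" by (simp add: ln_realpow)
    finally show ?thesis using k by simp
  qed
  ultimately have "summable (\<lambda>k. 1 / (real k * ln 2))" by (rule summable_comparison_test') 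
  then have "summable (\<lambda>k. ln 2 * (1 / (real k * ln 2)))" by (rule summable_mult)
  moreover have "(\<lambda>k. ln 2 * (1 / (real k * ln 2))) = (\<lambda>k. inverse (real k))"
    by (rule ext) (simp add: field_simps)
  ultimately have "summable (\<lambda>k. inverse (real k))" by simp
  then show False using not_summable_harmonic by blast
qed

lemma fL_diverge: "\<exists>N. (\<Sum>n\<in>{m..N}. fL n) \<ge> B"
proof (rule ccontr)
  assume "\<not> ?thesis"
  then have lt: "\<And>N. (\<Sum>n\<in>{m..N}. fL n) < B" by (simp add: not_le)
  have "(\<Sum>i<n. fL i) \<le> (\<Sum>i<m. fL i) + B" for n
  proof -
    have "{..<n} \<subseteq> {..<m} \<union> {m..n}" by auto
    then have "(\<Sum>i<n. fL i) \<le> (\<Sum>i\<in>{..<m} \<union> {m..n}. fL i)"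
      using fL_nonneg by (intro sum_mono2) auto
    also have "\<dots> = (\<Sum>i<m. fL i) + (\<Sum>i\<in>{m..n}. fL i)" by (rule sum.union_disjoint) auto
    finally show ?thesis using lt[of n] by linarith
  qed
  then have "summable fL" using fL_nonneg by (intro summableI_nonneg_bounded) auto
  then show False using fL_not_summable by blast
qed

lemma nat_ceiling_ge: "real (nat \<lceil>x\<rceil>) \<ge> x"
proof (cases "x \<le> 0")
  case True then show ?thesis by (smt (verit) of_nat_0_le_iff)
next
  case False
  then have "\<lceil>x\<rceil> \<ge> 0" by (simp add: ceiling_le_zero not_le less_imp_le)
  then have "real (nat \<lceil>x\<rceil>) = of_int \<lceil>x\<rceil>" by simp
  then show ?thesis by (simp add: le_of_int_ceiling)
qed

definition Kf :: "(nat \<Rightarrow> real) \<Rightarrow> nat \<Rightarrow> nat \<Rightarrow> nat" where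
  "Kf cc n G = nat \<lceil>4 * real G + (32 * (1 + 4 * real G))^2 + 1 / cc n\<rceil> + 1"

definition Mf :: "nat \<Rightarrow> nat \<Rightarrow> nat" where
  "Mf n K = nat \<lceil>2 * ln (real n) * (real n)^2 * (real K)^2\<rceil> + 1"

fun Gs :: "(nat \<Rightarrow> real) \<Rightarrow> nat \<Rightarrow> nat" where
  "Gs cc 0 = 1"
| "Gs cc (Suc n) = Gs cc n * Mf (Suc n) (Kf cc (Suc n) (Gs cc n))"

definition Kn :: "(nat \<Rightarrow> real) \<Rightarrow> nat \<Rightarrow> nat" where
  "Kn cc n = Kf cc n (Gs cc (n - 1))"

definition Msq :: "(nat \<Rightarrow> real) \<Rightarrow> nat \<Rightarrow> nat" where
  "Msq cc n = Mf n (Kn cc n)"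

definition rn :: "(nat \<Rightarrow> real) \<Rightarrow> nat \<Rightarrow> real" where
  "rn cc n = 1/(2*ln (real n)*real n*real (Kn cc n))"

definition yn :: "(nat \<Rightarrow> real) \<Rightarrow> nat \<Rightarrow> real" where
  "yn cc n = (if n < 3 then cc n / 2 else 1 / (2 * ln (real n) * (real n)^2 * (real (Kn cc n))^2))"

definition goodn :: "(nat \<Rightarrow> real) \<Rightarrow> nat \<Rightarrow> nat \<Rightarrow> bool" where
  "goodn cc n c = goodcell n (Kn cc n) (rn cc n) (Gs cc n) c"

definition qn :: "nat \<Rightarrow> real" where
  "qn n = (if n < 3 then 0 else 1 / (128 * ln (real n) * real n))"

lemma Gs_Suc': "Gs cc (Suc n) = Gs cc n * Msq cc (Suc n)"
  by (simp add: Msq_def Kn_def)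

lemma Gs_pos': "Gs cc n > 0"
  by (induction n) (auto simp: Mf_def)

lemma Kn_bounds:
  assumes c: "cc n > 0"
  shows "real (Kn cc n) \<ge> 4 * real (Gs cc (n - 1))"
    "real (Kn cc n) \<ge> (32 * (1 + 4 * real (Gs cc (n - 1))))^2"
    "real (Kn cc n) > 1 / cc n"
proof -
  define G where "G = real (Gs cc (n - 1))"
  have G0: "G \<ge> 0" unfolding G_def by simp
  have i0: "1 / cc n > 0" using c by simp
  have "real (Kn cc n) \<ge> 4 * G + (32 * (1 + 4 * G))^2 + 1 / cc n + 1"
  proof -
    have "real (Kn cc n) = real (nat \<lceil>4 * G + (32 * (1 + 4 * G))^2 + 1 / cc n\<rceil>) + 1"
      unfolding Kn_def Kf_def G_def by simp
    moreover have "real (nat \<lceil>4 * G + (32 * (1 + 4 * G))^2 + 1 / cc n\<rceil>) \<ge> 4 * G + (32 * (1 + 4 * G))^2 + 1 / cc n"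
      by (rule nat_ceiling_ge)
    ultimately show ?thesis by linarith
  qed
  moreover have "(32 * (1 + 4 * G))^2 \<ge> 0" by simp
  ultimately show "real (Kn cc n) \<ge> 4 * real (Gs cc (n - 1))"
    "real (Kn cc n) \<ge> (32 * (1 + 4 * real (Gs cc (n - 1))))^2"
    "real (Kn cc n) > 1 / cc n" unfolding G_def using G0 i0 by linarith+
qed

lemma Msq_bound: "real (Msq cc n) \<ge> 2 * ln (real n) * (real n)^2 * (real (Kn cc n))^2"
proof -
  have "real (nat \<lceil>2 * ln (real n) * (real n)^2 * (real (Kn cc n))^2\<rceil>) \<ge> 2 * ln (real n) * (real n)^2 * (real (Kn cc n))^2"
    by (rule nat_ceiling_ge)
  then show ?thesis unfolding Msq_def Mf_def by simp
qed

lemma qn01: "0 \<le> qn n \<and> qn n \<le> 1"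
proof (cases "n < 3")
  case False
  then have l: "ln (real n) \<ge> 1/2" using ln_ge_half by simp
  have n3: "real n \<ge> 3" using False by simp
  have "128 * ln (real n) * real n \<ge> 64 * 3" using l n3 by (intro mult_mono) auto
  then have "128 * ln (real n) * real n \<ge> 1" by linarith
  then show ?thesis unfolding qn_def using False by simp
qed (simp add: qn_def)

lemma cover_inst:
  assumes c: "\<And>n. cc n > 0"
  shows "cover_setup (Gs cc) (Msq cc) (goodn cc) qn"
proof (unfold_locales)
  show "Gs cc 0 = 1" by simp
  show "\<And>n. Gs cc (Suc n) = Gs cc n * Msq cc (Suc n)" by (rule Gs_Suc')
  show "\<And>n. 0 < Msq cc n" by (simp add: Msq_def Mf_def)
  show "\<And>n. 0 \<le> qn n \<and> qn n \<le> 1" by (rule qn01)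
next
  fix n i :: nat assume n3: "3 \<le> n" and i: "i < Gs cc (n - 1)"
  have nS: "n = Suc (n - 1)" using n3 by simp
  have Gn: "Gs cc n = Gs cc (n - 1) * Msq cc n" using Gs_Suc'[of cc "n - 1"] nS by simp
  have Kb: "real (Kn cc n) \<ge> 4 * real (Gs cc (n - 1))" "real (Kn cc n) \<ge> (32 * (1 + 4 * real (Gs cc (n - 1))))^2"
    using Kn_bounds[of cc n] c[of n] by auto
  have G1: "Gs cc (n - 1) \<ge> 1" using Gs_pos'[of cc "n - 1"] by simp
  have B: "real (card {c. c div Msq cc n = i \<and> goodcell n (Kn cc n) (1/(2*ln (real n)*real n*real (Kn cc n))) (Gs cc (n - 1) * Msq cc n) c})
           \<ge> real (Msq cc n) / (128 * ln (real n) * real n)"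
    by (rule block[OF n3 ln_ge_half[OF n3] G1 Kb(1) Kb(2) Msq_bound i])
  have e: "{c. c div Msq cc n = i \<and> goodn cc n c} = {c. c div Msq cc n = i \<and> goodcell n (Kn cc n) (1/(2*ln (real n)*real n*real (Kn cc n))) (Gs cc (n - 1) * Msq cc n) c}"
    unfolding goodn_def rn_def Gn[symmetric] ..
  have "qn n * real (Msq cc n) = real (Msq cc n) / (128 * ln (real n) * real n)"
    unfolding qn_def using n3 by simp
  then show "qn n * real (Msq cc n) \<le> real (card {c. c div Msq cc n = i \<and> goodn cc n c})"
    using B unfolding e by simp
next
  fix m :: nat and B :: real
  obtain N where N: "(\<Sum>n\<in>{m+3..N}. fL n) \<ge> 128 * B" using fL_diverge by blast
  have "(\<Sum>n\<in>{m..N}. qn n) \<ge> (\<Sum>n\<in>{m+3..N}. qn n)"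
    using qn01 by (intro sum_mono2) auto
  also have "(\<Sum>n\<in>{m+3..N}. qn n) = (\<Sum>n\<in>{m+3..N}. fL n / 128)"
  proof (rule sum.cong)
    fix n assume "n \<in> {m+3..N}"
    then have n3: "n \<ge> 3" by simp
    then have "max n 3 = n" by simp
    then show "qn n = fL n / 128" unfolding qn_def fL_def using n3 by simp
  qed simp
  also have "\<dots> = (\<Sum>n\<in>{m+3..N}. fL n) / 128" by (simp add: sum_divide_distrib)
  finally show "\<exists>N. B \<le> (\<Sum>n\<in>{m..N}. qn n)" using N by (intro exI[of _ N]) linarith
qed

lemma Limsup_freq:
  fixes f :: "nat \<Rightarrow> ereal"
  assumes "\<And>m. \<exists>n\<ge>m. l \<le> f n"
  shows "l \<le> Limsup sequentially f"
  unfolding Limsup_def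
proof (rule INF_greatest)
  fix P assume "P \<in> {P. eventually P sequentially}"
  then obtain N where N: "\<And>n. n \<ge> N \<Longrightarrow> P n" by (auto simp: eventually_sequentially)
  obtain n where n: "n \<ge> N" "l \<le> f n" using assms by blast
  show "l \<le> (SUP x\<in>Collect P. f x)" using N[OF n(1)] n(2) by (intro SUP_upper2[of n]) auto
qed

lemma good_dist:
  assumes z0: "Im z0 > 0" and n3: "n \<ge> 3" and x: "0 \<le> x" "x < 1" and c: "cc n > 0"
    and g: "goodn cc n (nat \<lfloor>real (Gs cc n) * x\<rfloor>)"
  shows "min_dist_Rn z0 n x (yn cc n) \<ge> ln (ln (real n)) - ln (max (Im z0) (1 / Im z0))"
proof -
  define K where "K = Kn cc n"
  define r where "r = rn cc n"
  define G' where "G' = Gs cc n"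
  define cl where "cl = nat \<lfloor>real G' * x\<rfloor>"
  define H where "H = ln (real n)"
  have H: "H \<ge> 1/2" unfolding H_def using ln_ge_half[OF n3] .
  have npos: "real n \<ge> 3" using n3 by simp
  have Gp: "real G' > 0" unfolding G'_def using Gs_pos' by simp
  have f0: "\<lfloor>real G' * x\<rfloor> \<ge> 0" using x Gp by simp
  have rc: "real cl = of_int \<lfloor>real G' * x\<rfloor>" unfolding cl_def using f0 by simp
  have ca: "real cl \<le> real G' * x" unfolding rc by (rule of_int_floor_le)
  have cb: "real G' * x < real cl + 1" unfolding rc by (rule real_of_int_floor_add_one_gt)
  have xa: "real cl / real G' \<le> x" using ca Gp by (simp add: field_simps mult.commute)
  have xb: "x \<le> (real cl + 1) / real G'" using cb Gp by (simp add: field_simps mult.commute)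
  from g obtain k a where k: "k \<in> {1..K}"
    and a1: "of_int a / (real n * real k) - r / (real n * real k) \<le> real cl / real G'"
    and a2: "(real cl + 1) / real G' \<le> of_int a / (real n * real k) + r / (real n * real k)"
    unfolding goodn_def goodcell_def K_def r_def G'_def cl_def by blast
  have k1: "k \<ge> 1" and kK: "k \<le> K" using k by auto
  have nk: "real n * real k > 0" using k1 npos by simp
  have "\<bar>x - of_int a / (real n * real k)\<bar> \<le> r / (real n * real k)" using a1 a2 xa xb by linarith
  then have "\<bar>x - of_int a / (real n * real k)\<bar> * (real n * real k) \<le> r / (real n * real k) * (real n * real k)"
    using nk by (intro mult_right_mono) auto
  moreover have "\<bar>x - of_int a / (real n * real k)\<bar> * (real n * real k) = \<bar>real n * real k * x - of_int a\<bar>"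
  proof -
    have "\<bar>x - of_int a / (real n * real k)\<bar> * (real n * real k) = \<bar>(x - of_int a / (real n * real k)) * (real n * real k)\<bar>"
      using nk by (simp add: abs_mult)
    also have "(x - of_int a / (real n * real k)) * (real n * real k) = real n * real k * x - of_int a"
      using nk k1 npos by (simp add: field_simps)
    finally show ?thesis .
  qed
  moreover have "r / (real n * real k) * (real n * real k) = r" using nk k1 n3 by simp
  ultimately have ax: "\<bar>real n * real k * x - of_int a\<bar> \<le> r" by linarith
  have Kpos: "real K \<ge> 1" using k1 kK by simp
  have y: "yn cc n = 1 / (2 * H * (real n)^2 * (real K)^2)" unfolding yn_def H_def K_def using n3 by simp
  have ypos: "yn cc n > 0" unfolding y using H npos Kpos by simp
  have Hpos: "H > 0" using H by simp
  have rr: "r^2 + (real n * real k * yn cc n)^2 \<le> yn cc n / H"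
  proof -
    have "(real n * real k * yn cc n)^2 \<le> (real n * real K * yn cc n)^2"
      using kK ypos npos by (intro power_mono mult_right_mono mult_left_mono) auto
    moreover have "r^2 + (real n * real K * yn cc n)^2 = yn cc n / H"
      unfolding y r_def rn_def H_def[symmetric] K_def[symmetric] using Hpos npos Kpos
      by (simp add: field_simps power2_eq_square)
    ultimately show ?thesis by linarith
  qed
  have "min_dist_Rn z0 n x (yn cc n) \<ge> ln H - ln (max (Im z0) (1 / Im z0))"
    using rn_lower[OF z0 _ k1 ypos Hpos ax rr] n3 by simp
  then show ?thesis unfolding H_def .
qed

lemma lnln_at_top: "filterlim (\<lambda>n. ln (ln (real n))) at_top sequentially"
  by (rule filterlim_compose[OF ln_at_top filterlim_compose[OF ln_at_top filterlim_real_sequentially]])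

theorem theorem1p6:
  fixes z0 :: complex and c :: "nat \<Rightarrow> real"
  assumes "z0 \<in> upper_half_plane"
    and "\<And>n. c n > 0"
  shows "\<exists>y :: nat \<Rightarrow> real. (\<forall>n. 0 < y n \<and> y n < c n) \<and>
           (AE x in lborel. x \<in> {0..<1} \<longrightarrow>
              Limsup sequentially (\<lambda>n. ereal (min_dist_Rn z0 n x (y n) / ln (ln (real n)))) \<ge> 1)"
proof (intro exI conjI)
  have z0: "Im z0 > 0" using assms(1) unfolding upper_half_plane_def by simp
  have cpos: "\<And>n. c n > 0" by (rule assms(2))
  show "\<forall>n. 0 < yn c n \<and> yn c n < c n"
  proof
    fix n
    show "0 < yn c n \<and> yn c n < c n"
    proof (cases "n < 3")
      case True then show ?thesis unfolding yn_def using cpos[of n] by simp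
    next
      case False
      then have n3: "n \<ge> 3" by simp
      define K where "K = real (Kn c n)"
      define H where "H = ln (real n)"
      have H: "H \<ge> 1/2" unfolding H_def using ln_ge_half[OF n3] .
      have npos: "real n \<ge> 3" using n3 by simp
      have KG: "K \<ge> 4 * real (Gs c (n - 1))" and Kc: "K > 1 / c n"
        using Kn_bounds[of c n] cpos[of n] unfolding K_def by auto
      have K1: "K \<ge> 1" using KG Gs_pos'[of c "n - 1"] by simp
      have y: "yn c n = 1 / (2 * H * (real n)^2 * K^2)" unfolding yn_def H_def K_def using False by simp
      have d1: "2 * H * (real n)^2 \<ge> 1"
      proof -
        have "(real n)^2 \<ge> 3^2" using npos by (intro power_mono) auto
        then have "2 * H * (real n)^2 \<ge> 1 * 9" using H by (intro mult_mono) auto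
        then show ?thesis by simp
      qed
      have d2: "2 * H * (real n)^2 * K^2 \<ge> K"
      proof -
        have "K^2 \<ge> K" using K1 by (simp add: power2_eq_square)
        then have "2 * H * (real n)^2 * K^2 \<ge> 1 * K" using d1 K1 by (intro mult_mono) auto
        then show ?thesis by simp
      qed
      have pos: "2 * H * (real n)^2 * K^2 > 0" using d2 K1 by linarith
      have "yn c n \<le> 1 / K" unfolding y using d2 K1 pos by (intro divide_left_mono) auto
      also have "1 / K < c n" using Kc cpos[of n] K1 by (simp add: field_simps)
      finally show ?thesis unfolding y using pos by simp
    qed
  qed
  interpret cs: cover_setup "Gs c" "Msq c" "goodn c" qn by (rule cover_inst[OF cpos])
  define C where "C = ln (max (Im z0) (1 / Im z0))"
  have "max (Im z0) (1 / Im z0) \<ge> 1"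
  proof (cases "Im z0 \<ge> 1")
    case False
    then have "1 / Im z0 \<ge> 1" using z0 by (simp add: field_simps)
    then show ?thesis by simp
  qed simp
  then have C0: "C \<ge> 0" unfolding C_def by simp
  show "AE x in lborel. x \<in> {0..<1} \<longrightarrow>
          Limsup sequentially (\<lambda>n. ereal (min_dist_Rn z0 n x (yn c n) / ln (ln (real n)))) \<ge> 1"
    using cs.cover_main
  proof (rule AE_mp[OF _ AE_I2], intro impI)
    fix x assume xin: "x \<in> {0..<1}"
      and H: "x \<in> {0..<1} \<longrightarrow> (\<forall>m. \<exists>n\<ge>m. goodn c n (nat \<lfloor>real (Gs c n) * x\<rfloor>))"
    have x: "0 \<le> x" "x < 1" using xin by auto
    have io: "\<forall>m. \<exists>n\<ge>m. goodn c n (nat \<lfloor>real (Gs c n) * x\<rfloor>)" using H xin by simp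
    define f where "f = (\<lambda>n. ereal (min_dist_Rn z0 n x (yn c n) / ln (ln (real n))))"
    have eps: "ereal (1 - e) \<le> Limsup sequentially f" if e: "e > 0" for e
    proof (rule Limsup_freq)
      fix m
      have "eventually (\<lambda>n. max 1 (C / e) \<le> ln (ln (real n))) sequentially"
        using lnln_at_top unfolding filterlim_at_top by blast
      then obtain N0 where N0: "\<And>n. n \<ge> N0 \<Longrightarrow> max 1 (C / e) \<le> ln (ln (real n))"
        by (auto simp: eventually_sequentially)
      obtain n where n: "n \<ge> max m (max N0 3)" and g: "goodn c n (nat \<lfloor>real (Gs c n) * x\<rfloor>)"
        using io by blast
      have n3: "n \<ge> 3" using n by simp
      have L: "ln (ln (real n)) \<ge> 1" "ln (ln (real n)) \<ge> C / e" using N0[of n] n by auto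
      have Lpos: "ln (ln (real n)) > 0" using L by simp
      have d: "min_dist_Rn z0 n x (yn c n) \<ge> ln (ln (real n)) - C"
        using good_dist[OF z0 n3 x cpos g] unfolding C_def .
      have "C \<le> e * ln (ln (real n))" using L(2) e by (simp add: field_simps)
      then have "(1 - e) * ln (ln (real n)) \<le> ln (ln (real n)) - C" by (simp add: algebra_simps)
      also have "\<dots> \<le> min_dist_Rn z0 n x (yn c n)" using d .
      finally have "1 - e \<le> min_dist_Rn z0 n x (yn c n) / ln (ln (real n))"
        using Lpos by (simp add: field_simps)
      then show "\<exists>n\<ge>m. ereal (1 - e) \<le> f n" unfolding f_def using n by (intro exI[of _ n]) auto
    qed
    have "1 \<le> Limsup sequentially f"
    proof (rule ereal_le_epsilon2)
      fix e :: real assume e: "0 < e"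
      have "ereal (1 - e) + ereal e \<le> Limsup sequentially f + ereal e"
        using eps[OF e] by (rule add_right_mono)
      then show "1 \<le> Limsup sequentially f + ereal e" by (simp add: one_ereal_def)
    qed
    then show "1 \<le> Limsup sequentially (\<lambda>n. ereal (min_dist_Rn z0 n x (yn c n) / ln (ln (real n))))"
      unfolding f_def .
  qed
qed

end
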